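(* Let $A(q)\in\mathrm{GL}_m(\mathbb C)$ (for $q>1$ close to $1$) and suppose there is $k\in\mathbb N^*$ such that $A(q)^{-1}(q-1)^k\to0$ as $q\to1$. Let $n\in\mathbb Z$. Then there exist $z\mapsto E_1(z,q)\in\mathrm{GL}_m(\mathbb C\{z\})$ and $F_2(z,q)\in\mathcal O^*_m$ such that $$\sigma_q\big(E_1(z,q)F_2(z,q)\big)=z^nA(q)E_1(z,q)F_2(z,q)=E_1(z,q)F_2(z,q)A(q)z^n.$$
   Context: $q>1$, $\sigma_qf(z)=f(qz)$, $\delta_q=(\sigma_q-\mathrm{Id})/(q-1)$. $\mathbb C\{z\}$: convergent power series. $\mathcal O^*_m$: the set of families $F(z,q)$ of invertible $m\times m$ matrices whose entries are, for $q$ close to $1$, meromorphic on $\mathbb C^*$, such that $(\delta_qF(z,q))F(z,q)^{-1}\to0$ and $F(z,q)\to\mathrm{Id}$ as $q\to1$, both uniformly on compact subsets of $\mathbb C^*$. *)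

theory Defs
  imports "HOL-Analysis.Analysis"
begin

text \<open>Meromorphic functions on an open set S: holomorphic off a set P of
  isolated points (closed and discrete in S), each point of P being at most a pole.
  Values at points of P are irrelevant (junk).\<close>
definition mero_on :: "complex set \<Rightarrow> (complex \<Rightarrow> complex) \<Rightarrow> bool" where
  "mero_on S f \<longleftrightarrow> (\<exists>P. P \<subseteq> S \<and> (\<forall>p\<in>S. \<not> p islimpt P) \<and> f holomorphic_on (S - P) \<and>
      (\<forall>p\<in>P. \<exists>N::nat. \<exists>c. ((\<lambda>z. (z - p) ^ N * f z) \<longlongrightarrow> c) (at p)))"

definition mat_analytic_on :: "(complex \<Rightarrow> complex^'m^'m) \<Rightarrow> complex set \<Rightarrow> bool" where
  "mat_analytic_on F S \<longleftrightarrow> (\<forall>i j. (\<lambda>z. F z $ i $ j) analytic_on S)"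

definition sigma_q :: "real \<Rightarrow> (complex \<Rightarrow> 'a) \<Rightarrow> complex \<Rightarrow> 'a" where
  "sigma_q q f z = f (complex_of_real q * z)"

definition delta_q :: "real \<Rightarrow> (complex \<Rightarrow> 'a::real_vector) \<Rightarrow> complex \<Rightarrow> 'a" where
  "delta_q q f z = (1 / (q - 1)) *\<^sub>R (sigma_q q f z - f z)"

definition O_star :: "(complex \<Rightarrow> real \<Rightarrow> complex^'m^'m) \<Rightarrow> bool" where
  "O_star F \<longleftrightarrow>
     (\<forall>\<^sub>F q in at_right 1.
        (\<forall>i j. mero_on (- {0}) (\<lambda>z. F z q $ i $ j)) \<and>
        (\<exists>z. z \<noteq> 0 \<and> mat_analytic_on (\<lambda>w. F w q) {z} \<and> det (F z q) \<noteq> 0)) \<and>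
     (\<forall>K. compact K \<and> K \<subseteq> - {0} \<longrightarrow> (\<forall>\<epsilon>>0. \<forall>\<^sub>F q in at_right 1.
        mat_analytic_on (\<lambda>w. F w q) K \<and>
        (\<forall>z\<in>K. norm (F z q - mat 1) < \<epsilon>))) \<and>
     (\<forall>K. compact K \<and> K \<subseteq> - {0} \<longrightarrow> (\<forall>\<epsilon>>0. \<forall>\<^sub>F q in at_right 1.
        (\<forall>z\<in>K. norm (delta_q q (\<lambda>w. F w q) z ** matrix_inv (F z q)) < \<epsilon>)))"

text \<open>z \<mapsto> E(z) lies in GL_m(C{z}): entries are convergent power series
  (holomorphic on a disc around 0) and E(0) is invertible.\<close>
definition GL_conv :: "(complex \<Rightarrow> complex^'m^'m) \<Rightarrow> bool" where
  "GL_conv E \<longleftrightarrow> (\<exists>r>0. \<forall>i j. (\<lambda>z. E z $ i $ j) holomorphic_on ball 0 r) \<and> invertible (E 0)"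

end

theory Submission
  imports Defs
begin


fun co :: "real \<Rightarrow> real \<Rightarrow> nat \<Rightarrow> real" where
  "co q a 0 = 1"
| "co q a (Suc k) = a * co q a k / (q ^ Suc k - 1)"

lemma pow_ge_lin: assumes "q > 1" shows "real k * (q - 1) \<le> q ^ k - 1"
proof -
  have "1 + real k * (q - 1) \<le> (1 + (q - 1)) ^ k"
    by (rule Bernoulli_inequality) (use assms in simp)
  then show ?thesis by simp
qed

lemma co_bound:
  assumes q: "q > 1" and a: "a \<ge> 0"
  shows "0 \<le> co q a k \<and> co q a k \<le> (a / (q - 1)) ^ k / fact k"
proof (induction k)
  case 0 then show ?case by simp
next
  case (Suc k)
  have l: "real (Suc k) * (q - 1) \<le> q ^ Suc k - 1" by (rule pow_ge_lin[OF q])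
  have pos: "real (Suc k) * (q - 1) > 0" using q by simp
  have pos2: "q ^ Suc k - 1 > 0" using l pos by linarith
  have "co q a (Suc k) = a * co q a k / (q ^ Suc k - 1)" by simp
  also have "\<dots> \<le> a * co q a k / (real (Suc k) * (q - 1))"
    by (intro divide_left_mono l mult_nonneg_nonneg a) (use Suc pos pos2 in auto)
  also have "\<dots> \<le> a * ((a / (q - 1)) ^ k / fact k) / (real (Suc k) * (q - 1))"
    by (intro divide_right_mono mult_left_mono) (use Suc pos a in auto)
  also have "\<dots> = (a / (q - 1)) ^ Suc k / fact (Suc k)"
    using q by (simp add: field_simps)
  finally have 1: "co q a (Suc k) \<le> (a / (q - 1)) ^ Suc k / fact (Suc k)" .
  have "0 \<le> co q a (Suc k)" using Suc pos l a by simp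
  with 1 show ?case by blast
qed



type_synonym ('m) cmat = "complex^'m^'m"

lemma norm_le_sum_vec: "norm (x::'a::real_normed_vector^'n) \<le> (\<Sum>i\<in>UNIV. norm (x$i))"
  unfolding norm_vec_def by (rule L2_set_le_sum) simp

lemma nth_le: "norm ((x::'a::real_normed_vector^'n) $ i) \<le> norm x"
  unfolding norm_vec_def by (rule member_le_L2_set) simp_all

lemma norm_entry_le: "norm ((M::'a::real_normed_vector^'n^'k) $ i $ j) \<le> norm M"
  using nth_le[of "M$i" j] nth_le[of M i] by linarith

lemma mm_add_rdistrib: "((A::'a::semiring_1^'n^'m) + B) ** C = A ** C + B ** C"
  by (vector matrix_matrix_mult_def sum.distrib[symmetric] field_simps)

lemma mm_diff_rdistrib: "((A::'a::ring_1^'n^'m) - B) ** C = A ** C - B ** C"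
  by (vector matrix_matrix_mult_def sum_subtractf[symmetric] field_simps)

lemma mm_diff_ldistrib: "(C::'a::ring_1^'n^'m) ** (A - B) = C ** A - C ** B"
  by (vector matrix_matrix_mult_def sum_subtractf[symmetric] field_simps)

lemma norm_mmult:
  fixes X Y :: "('m::finite) cmat"
  shows "norm (X ** Y) \<le> real CARD('m) ^ 3 * norm X * norm Y"
proof -
  have e: "norm ((X ** Y) $ i $ j) \<le> real CARD('m) * (norm X * norm Y)" for i j
  proof -
    have "norm ((X ** Y) $ i $ j) = norm (\<Sum>k\<in>UNIV. X$i$k * Y$k$j)"
      by (simp add: matrix_matrix_mult_def)
    also have "\<dots> \<le> (\<Sum>k\<in>(UNIV::'m set). norm X * norm Y)"
      by (intro order_trans[OF norm_sum] sum_mono)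
         (simp add: norm_mult mult_mono norm_entry_le)
    finally show ?thesis by simp
  qed
  have "norm (X ** Y) \<le> (\<Sum>i\<in>UNIV. norm ((X ** Y) $ i))" by (rule norm_le_sum_vec)
  also have "\<dots> \<le> (\<Sum>i\<in>(UNIV::'m set). \<Sum>j\<in>(UNIV::'m set). norm ((X ** Y) $ i $ j))"
    by (intro sum_mono norm_le_sum_vec)
  also have "\<dots> \<le> (\<Sum>i\<in>(UNIV::'m set). \<Sum>j\<in>(UNIV::'m set). real CARD('m) * (norm X * norm Y))"
    by (intro sum_mono e)
  also have "\<dots> = real CARD('m) ^ 3 * norm X * norm Y"
    by (simp add: power3_eq_cube)
  finally show ?thesis .
qed

lemma norm_mvmult:
  fixes X :: "('m::finite) cmat" and x :: "complex^'m"
  shows "norm (X *v x) \<le> real CARD('m) ^ 2 * norm X * norm x"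
proof -
  have e: "norm ((X *v x) $ i) \<le> real CARD('m) * (norm X * norm x)" for i
  proof -
    have xk: "norm (x $ k) \<le> norm x" for k by (rule nth_le)
    have "norm ((X *v x) $ i) = norm (\<Sum>k\<in>UNIV. X$i$k * x$k)"
      by (simp add: matrix_vector_mult_def)
    also have "\<dots> \<le> (\<Sum>k\<in>(UNIV::'m set). norm X * norm x)"
      by (intro order_trans[OF norm_sum] sum_mono)
         (simp add: norm_mult mult_mono norm_entry_le xk)
    finally show ?thesis by simp
  qed
  have "norm (X *v x) \<le> (\<Sum>i\<in>UNIV. norm ((X *v x) $ i))" by (rule norm_le_sum_vec)
  also have "\<dots> \<le> (\<Sum>i\<in>(UNIV::'m set). real CARD('m) * (norm X * norm x))"
    by (intro sum_mono e)
  also have "\<dots> = real CARD('m) ^ 2 * norm X * norm x"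
    by (simp add: power2_eq_square)
  finally show ?thesis .
qed

lemma kap_ge1: "real CARD('m::finite) ^ 3 \<ge> 1"
  using finite_UNIV_card_ge_0[where 'a='m] by simp

lemma bounded_linear_lmult: "bounded_linear (\<lambda>Y::'m cmat. X ** Y)" for X :: "('m::finite) cmat"
proof (rule bounded_linear_intro[where K = "real CARD('m) ^ 3 * norm X"])
  show "X ** (Y + Z) = X ** Y + X ** Z" for Y Z :: "'m cmat" by (rule matrix_add_ldistrib)
  show "X ** (r *\<^sub>R Y) = r *\<^sub>R (X ** Y)" for r and Y :: "'m cmat" by (simp add: matrix_scalar_ac scalar_matrix_assoc)
  show "norm (X ** Y) \<le> norm Y * (real CARD('m) ^ 3 * norm X)"
    for Y :: "'m cmat" using norm_mmult[of X Y] by (simp add: mult_ac)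
qed

lemma bounded_linear_rmult: "bounded_linear (\<lambda>Y::'m cmat. Y ** X)" for X :: "('m::finite) cmat"
proof (rule bounded_linear_intro[where K = "real CARD('m) ^ 3 * norm X"])
  show "(Y + Z) ** X = Y ** X + Z ** X" for Y Z :: "'m cmat" by (rule mm_add_rdistrib)
  show "(r *\<^sub>R Y) ** X = r *\<^sub>R (Y ** X)" for r and Y :: "'m cmat" by (simp add: scalar_matrix_assoc)
  show "norm (Y ** X) \<le> norm Y * (real CARD('m) ^ 3 * norm X)"
    for Y :: "'m cmat" using norm_mmult[of Y X] by (simp add: mult_ac)
qed

lemma bounded_linear_entry: "bounded_linear (\<lambda>Y::('m::finite) cmat. Y $ i $ j)"
  using bounded_linear_compose[OF bounded_linear_vec_nth[of j] bounded_linear_vec_nth[of i]] by simp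



fun mpow :: "'a::semiring_1^'n^'n \<Rightarrow> nat \<Rightarrow> 'a^'n^'n" where
  "mpow B 0 = mat 1"
| "mpow B (Suc k) = B ** mpow B k"

definition sc :: "complex \<Rightarrow> ('m::finite) cmat \<Rightarrow> 'm cmat" where
  "sc c M = (\<chi> i j. c * M$i$j)"

lemma sc_entry [simp]: "sc c M $ i $ j = c * M $ i $ j"
  by (simp add: sc_def)

lemma sc_mult_left: "sc c X ** Y = sc c (X ** Y)"
  by (simp add: vec_eq_iff matrix_matrix_mult_def sum_distrib_left mult_ac)

lemma sc_mult_right: "X ** sc c Y = sc c (X ** Y)"
  by (simp add: vec_eq_iff matrix_matrix_mult_def sum_distrib_left mult_ac)

lemma sc_sc: "sc a (sc b X) = sc (a * b) X"
  by (simp add: vec_eq_iff)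

lemma sc_one [simp]: "sc 1 X = X"
  by (simp add: vec_eq_iff)

lemma sc_real: "sc (of_real r) X = r *\<^sub>R X"
  by (simp add: vec_eq_iff) (simp add: scaleR_conv_of_real)

lemma mm_scaleR_right: "(A::'a::real_algebra_1^'n^'m) ** (k *\<^sub>R B) = k *\<^sub>R (A ** B)"
  by (simp add: matrix_scalar_ac scalar_matrix_assoc)

lemma mm_scaleR_left: "(k *\<^sub>R (A::'a::real_algebra_1^'n^'m)) ** B = k *\<^sub>R (A ** B)"
  by (simp add: scalar_matrix_assoc)

lemma sc_add: "sc c (X + Y) = sc c X + sc c Y"
  by (simp add: vec_eq_iff algebra_simps)

lemma sc_diff: "sc c (X - Y) = sc c X - sc c Y"
  by (simp add: vec_eq_iff algebra_simps)

lemma sc_add_left: "sc (a + b) X = sc a X + sc b X"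
  by (simp add: vec_eq_iff algebra_simps)

lemma sc_diff_left: "sc (a - b) X = sc a X - sc b X"
  by (simp add: vec_eq_iff algebra_simps)

lemma sc_mat: "sc c (mat 1) = mat c"
  by (simp add: vec_eq_iff mat_def)

lemma sc_zero [simp]: "sc 0 X = 0"
  by (simp add: vec_eq_iff)

lemma norm_sc: "norm (sc c X) = norm c * norm X"
proof -
  have "norm (sc c X $ i) = norm c * norm (X $ i)" for i
  proof -
    have "norm (sc c X $ i) = L2_set (\<lambda>j. norm c * norm (X$i$j)) UNIV"
      by (simp add: norm_vec_def norm_mult)
    also have "\<dots> = norm c * norm (X $ i)"
      by (simp add: norm_vec_def L2_set_right_distrib)
    finally show ?thesis .
  qed
  then have "norm (sc c X) = L2_set (\<lambda>i. norm c * norm (X$i)) UNIV"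
    by (simp add: norm_vec_def)
  also have "\<dots> = norm c * norm X"
    by (simp add: norm_vec_def L2_set_right_distrib)
  finally show ?thesis .
qed

lemma mpow_sc: "mpow (sc z C) k = sc (z ^ k) (mpow C k)"
  by (induction k) (simp_all add: sc_mult_left sc_mult_right sc_sc mult.commute)

lemma mpow_scaleR: "mpow (r *\<^sub>R (C::'m::finite cmat)) k = (r ^ k) *\<^sub>R (mpow C k)"
  using mpow_sc[of "of_real r" C k] by (simp add: sc_real flip: of_real_power)

lemma mpow_comm:
  fixes N B :: "'a::semiring_1^'n^'n"
  assumes "N ** B = B ** N"
  shows "N ** mpow B k = mpow B k ** N"
proof (induction k)
  case 0 then show ?case by simp
next
  case (Suc k)
  have "N ** mpow B (Suc k) = (N ** B) ** mpow B k" by (simp add: matrix_mul_assoc)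
  also have "\<dots> = B ** (N ** mpow B k)" by (simp add: assms matrix_mul_assoc)
  also have "\<dots> = mpow B (Suc k) ** N" by (simp add: Suc matrix_mul_assoc)
  finally show ?case .
qed

lemma mpow_norm:
  "norm (mpow (B::'m::finite cmat) k) \<le> norm (mat 1 :: 'm cmat) * (real CARD('m) ^ 3 * norm B) ^ k"
proof (induction k)
  case 0 then show ?case by simp
next
  case (Suc k)
  have "norm (mpow B (Suc k)) \<le> real CARD('m) ^ 3 * norm B * norm (mpow B k)"
    by (simp add: norm_mmult)
  also have "\<dots> \<le> real CARD('m) ^ 3 * norm B * (norm (mat 1 :: 'm cmat) * (real CARD('m) ^ 3 * norm B) ^ k)"
    by (intro mult_left_mono Suc) simp
  finally show ?case by (simp add: mult_ac)
qed

definition mser :: "real \<Rightarrow> real \<Rightarrow> ('m::finite) cmat \<Rightarrow> 'm cmat" where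
  "mser q a B = (\<Sum>k. co q a k *\<^sub>R mpow B k)"

lemma mser_term_bound:
  assumes q: "q > 1" and a: "a \<ge> 0"
  shows "norm (co q a k *\<^sub>R mpow (B::'m::finite cmat) k)
          \<le> norm (mat 1 :: 'm cmat) * (a * real CARD('m) ^ 3 * norm B / (q - 1)) ^ k / fact k"
proof -
  have c: "0 \<le> co q a k" "co q a k \<le> (a / (q - 1)) ^ k / fact k" using co_bound[OF q a] by auto
  have "norm (co q a k *\<^sub>R mpow B k) = co q a k * norm (mpow B k)" using c by simp
  also have "\<dots> \<le> (a / (q - 1)) ^ k / fact k * (norm (mat 1 :: 'm cmat) * (real CARD('m) ^ 3 * norm B) ^ k)"
    by (intro mult_mono c mpow_norm) (use q a in auto)
  also have "\<dots> = norm (mat 1 :: 'm cmat) * (a * real CARD('m) ^ 3 * norm B / (q - 1)) ^ k / fact k"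
    by (simp add: power_mult_distrib power_divide field_simps)
  finally show ?thesis .
qed

lemma mser_summable_norm:
  assumes q: "q > 1" and a: "a \<ge> 0"
  shows "summable (\<lambda>k. norm (co q a k *\<^sub>R mpow (B::'m::finite cmat) k))"
proof (rule summable_comparison_test')
  let ?x = "a * real CARD('m) ^ 3 * norm B / (q - 1)"
  have "summable (\<lambda>k. ?x ^ k /\<^sub>R fact k)" by (rule summable_exp_generic)
  then show "summable (\<lambda>k. norm (mat 1 :: 'm cmat) * ?x ^ k / fact k)"
    using summable_mult[of "\<lambda>k. ?x ^ k /\<^sub>R fact k" "norm (mat 1 :: 'm cmat)"]
    by (simp add: divide_inverse mult_ac)
  show "norm (norm (co q a k *\<^sub>R mpow B k)) \<le> norm (mat 1 :: 'm cmat) * ?x ^ k / fact k" for k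
    using mser_term_bound[OF q a, of k B] by simp
qed

lemma mser_summable:
  assumes q: "q > 1" and a: "a \<ge> 0"
  shows "summable (\<lambda>k. co q a k *\<^sub>R mpow (B::'m::finite cmat) k)"
  by (rule summable_norm_cancel[OF mser_summable_norm[OF q a]])

lemma mser_feq:
  assumes q: "q > 1" and a: "a \<ge> 0"
  shows "mser q a (q *\<^sub>R B) = mser q a B + a *\<^sub>R (B ** mser q a (B::'m::finite cmat))"
proof -
  define f where "f k = co q a k *\<^sub>R mpow B k" for k
  define g where "g k = co q a k *\<^sub>R mpow (q *\<^sub>R B) k" for k
  have sf: "summable f" unfolding f_def by (rule mser_summable[OF q a])
  have sg: "summable g" unfolding g_def by (rule mser_summable[OF q a])
  have d0: "g 0 - f 0 = 0" by (simp add: f_def g_def)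
  have dS: "g (Suc j) - f (Suc j) = a *\<^sub>R (B ** f j)" for j
  proof -
    have "q ^ Suc j > 1" using q by (rule one_less_power) simp
    then have qp: "q ^ Suc j - 1 \<noteq> 0" by simp
    have "g (Suc j) - f (Suc j) = (co q a (Suc j) * q ^ Suc j - co q a (Suc j)) *\<^sub>R mpow B (Suc j)"
      by (simp add: f_def g_def mpow_scaleR scaleR_diff_left del: mpow.simps co.simps power_Suc)
    also have "co q a (Suc j) * q ^ Suc j - co q a (Suc j) = a * co q a j"
    proof -
      have "co q a (Suc j) * (q ^ Suc j - 1) = a * co q a j"
        using qp by (simp del: power_Suc)
      then show ?thesis by (metis mult.right_neutral right_diff_distrib)
    qed
    finally show ?thesis
      by (simp add: f_def mm_scaleR_right)
  qed
  have sd: "summable (\<lambda>k. g k - f k)" using sf sg by (rule summable_diff[rotated])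
  have mf: "mser q a B = suminf f" unfolding mser_def by (rule suminf_cong) (simp add: f_def)
  have mg: "mser q a (q *\<^sub>R B) = suminf g" unfolding mser_def by (rule suminf_cong) (simp add: g_def)
  have "mser q a (q *\<^sub>R B) - mser q a B = suminf g - suminf f"
    by (simp add: mf mg)
  also have "\<dots> = (\<Sum>k. g k - f k)" by (rule suminf_diff[OF sg sf])
  also have "\<dots> = (\<Sum>k. g (Suc k) - f (Suc k))"
    using suminf_split_head[OF sd] d0 by simp
  also have "\<dots> = (\<Sum>k. a *\<^sub>R (B ** f k))" by (simp add: dS)
  also have "\<dots> = a *\<^sub>R (B ** suminf f)"
  proof -
    have bl: "bounded_linear (\<lambda>Y::'m cmat. a *\<^sub>R (B ** Y))"
      by (intro bounded_linear_compose[OF bounded_linear_scaleR_right bounded_linear_lmult])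
    show ?thesis using bounded_linear.suminf[OF bl sf] by simp
  qed
  finally show ?thesis by (simp add: mf algebra_simps)
qed

lemma mser_comm:
  assumes q: "q > 1" and a: "a \<ge> 0" and c: "N ** B = B ** N"
  shows "N ** mser q a B = mser q a B ** (N::'m::finite cmat)"
proof -
  have s: "summable (\<lambda>k. co q a k *\<^sub>R mpow B k)" by (rule mser_summable[OF q a])
  have "N ** mser q a B = (\<Sum>k. N ** (co q a k *\<^sub>R mpow B k))"
    unfolding mser_def by (rule bounded_linear.suminf[OF bounded_linear_lmult s])
  also have "\<dots> = (\<Sum>k. (co q a k *\<^sub>R mpow B k) ** N)"
    using mpow_comm[OF c] by (simp add: mm_scaleR_left mm_scaleR_right)
  also have "\<dots> = mser q a B ** N"
    unfolding mser_def by (rule bounded_linear.suminf[OF bounded_linear_rmult s, symmetric])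
  finally show ?thesis .
qed

lemma mser_entry:
  assumes q: "q > 1" and a: "a \<ge> 0"
  shows "mser q a (B::'m::finite cmat) $ i $ j = (\<Sum>k. of_real (co q a k) * mpow B k $ i $ j)"
proof -
  have s: "summable (\<lambda>k. co q a k *\<^sub>R mpow B k)" by (rule mser_summable[OF q a])
  show ?thesis unfolding mser_def
    using bounded_linear.suminf[OF bounded_linear_entry s, of i j]
    by simp (simp add: scaleR_conv_of_real)
qed

lemma mser_bound:
  assumes q: "q > 1" and a: "a \<ge> 0"
    and x: "a * real CARD('m) ^ 3 * norm B / (q - 1) \<le> 1/2"
  shows "norm (mser q a (B::'m::finite cmat) - mat 1)
           \<le> 2 * norm (mat 1 :: 'm cmat) * (a * real CARD('m) ^ 3 * norm B / (q - 1))"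
proof -
  define x where "x = a * real CARD('m) ^ 3 * norm B / (q - 1)"
  define n1 where "n1 = norm (mat 1 :: 'm cmat)"
  define f where "f k = co q a k *\<^sub>R mpow B k" for k
  have x0: "0 \<le> x" using q a by (simp add: x_def)
  have x1: "x \<le> 1/2" using x by (simp add: x_def)
  have sf: "summable f" unfolding f_def by (rule mser_summable[OF q a])
  have snf: "summable (\<lambda>k. norm (f k))" unfolding f_def by (rule mser_summable_norm[OF q a])
  have snf': "summable (\<lambda>k. norm (f (Suc k)))"
    using snf by (subst summable_Suc_iff)
  have fb: "norm (f k) \<le> n1 * x ^ k" for k
  proof -
    have "norm (f k) \<le> n1 * x ^ k / fact k"
      unfolding f_def n1_def x_def by (rule mser_term_bound[OF q a])
    also have "\<dots> \<le> n1 * x ^ k"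
    proof -
      have "0 \<le> n1 * x ^ k" using x0 by (simp add: n1_def)
      moreover have "(1::real) \<le> fact k" by (rule fact_ge_1)
      ultimately show ?thesis by (simp add: divide_le_eq mult_le_cancel_left1 mult_left_mono)
    qed
    finally show ?thesis .
  qed
  have g: "summable (\<lambda>k. n1 * x ^ Suc k)"
    using x0 x1 by (intro summable_mult) (simp add: summable_Suc_iff)
  have "mser q a B - mat 1 = (\<Sum>k. f (Suc k))"
  proof -
    have "(\<Sum>k. f (Suc k)) = suminf f - f 0" by (rule suminf_split_head[OF sf])
    moreover have "f 0 = mat 1" by (simp add: f_def)
    moreover have "mser q a B = suminf f" unfolding mser_def by (rule suminf_cong) (simp add: f_def)
    ultimately show ?thesis by simp
  qed
  then have "norm (mser q a B - mat 1) \<le> (\<Sum>k. norm (f (Suc k)))"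
    using summable_norm[OF snf'] by simp
  also have "\<dots> \<le> (\<Sum>k. n1 * x ^ Suc k)"
    by (intro suminf_le fb snf' g)
  also have "\<dots> = n1 * x * (\<Sum>k. x ^ k)"
    using suminf_mult[of "\<lambda>k. x ^ k" "n1 * x"] x0 x1 by (simp add: mult_ac)
  also have "\<dots> = n1 * x / (1 - x)"
    using x0 x1 by (simp add: suminf_geometric)
  also have "\<dots> \<le> n1 * x / (1/2)"
    by (rule divide_left_mono) (use x0 x1 in \<open>auto simp: n1_def\<close>)
  also have "\<dots> = 2 * n1 * x" by simp
  finally show ?thesis by (simp add: x_def n1_def)
qed



lemma powser_holo:
  assumes "\<And>y. summable (\<lambda>n. c n * y ^ n)"
  shows "(\<lambda>y::complex. \<Sum>n. c n * y ^ n) holomorphic_on UNIV"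
  unfolding holomorphic_on_open[OF open_UNIV]
  using termdiffs_strong_converges_everywhere[OF assms] by blast

definition ser :: "real \<Rightarrow> real \<Rightarrow> complex \<Rightarrow> complex" where
  "ser q a y = (\<Sum>k. of_real (co q a k) * y ^ k)"

lemma ser_summable_norm:
  fixes y :: complex
  assumes q: "q > 1" and a: "a \<ge> 0"
  shows "summable (\<lambda>k. norm (of_real (co q a k) * y ^ k))"
proof (rule summable_comparison_test')
  let ?x = "a * norm y / (q - 1)"
  show "summable (\<lambda>k. ?x ^ k /\<^sub>R fact k)" by (rule summable_exp_generic)
  show "norm (norm (of_real (co q a k) * y ^ k)) \<le> ?x ^ k /\<^sub>R fact k" for k
  proof -
    have c: "0 \<le> co q a k" "co q a k \<le> (a / (q - 1)) ^ k / fact k" using co_bound[OF q a] by auto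
    have "norm (norm (of_real (co q a k) * y ^ k)) = co q a k * norm y ^ k"
      using c by (simp add: norm_mult norm_power)
    also have "\<dots> \<le> (a / (q - 1)) ^ k / fact k * norm y ^ k"
      by (intro mult_right_mono c) simp
    also have "\<dots> = ?x ^ k /\<^sub>R fact k"
      by (simp add: power_mult_distrib power_divide field_simps)
    finally show ?thesis .
  qed
qed

lemma ser_summable:
  fixes y :: complex
  assumes q: "q > 1" and a: "a \<ge> 0"
  shows "summable (\<lambda>k. of_real (co q a k) * y ^ k)"
  by (rule summable_norm_cancel[OF ser_summable_norm[OF q a]])

lemma ser_holo:
  assumes q: "q > 1" and a: "a \<ge> 0"
  shows "ser q a holomorphic_on S"
proof -
  have "(\<lambda>y. \<Sum>k. of_real (co q a k) * y ^ k) holomorphic_on UNIV"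
    by (rule powser_holo[OF ser_summable[OF q a]])
  then show ?thesis unfolding ser_def[abs_def] by (rule holomorphic_on_subset) simp
qed

lemma ser_0: "ser q a 0 = 1"
proof -
  have "(\<lambda>k. of_real (co q a k) * (0::complex) ^ k) sums (\<Sum>k<1. of_real (co q a k) * (0::complex) ^ k)"
    by (rule sums_finite) auto
  then show ?thesis unfolding ser_def by (simp add: sums_iff)
qed

lemma ser_feq:
  assumes q: "q > 1" and a: "a \<ge> 0"
  shows "ser q a (of_real q * y) = (1 + of_real a * y) * ser q a y"
proof -
  define f where "f k = of_real (co q a k) * y ^ k" for k
  define g where "g k = of_real (co q a k) * (of_real q * y) ^ k" for k
  have sf: "summable f" unfolding f_def by (rule ser_summable[OF q a])
  have sg: "summable g" unfolding g_def by (rule ser_summable[OF q a])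
  have mf: "ser q a y = suminf f" unfolding ser_def by (rule suminf_cong) (simp add: f_def)
  have mg: "ser q a (of_real q * y) = suminf g" unfolding ser_def by (rule suminf_cong) (simp add: g_def)
  have d0: "g 0 - f 0 = 0" by (simp add: f_def g_def)
  have dS: "g (Suc j) - f (Suc j) = of_real a * y * f j" for j
  proof -
    have "q ^ Suc j > 1" using q by (rule one_less_power) simp
    then have qp: "q ^ Suc j - 1 \<noteq> 0" by simp
    have e: "co q a (Suc j) * q ^ Suc j - co q a (Suc j) = a * co q a j"
    proof -
      have "co q a (Suc j) * (q ^ Suc j - 1) = a * co q a j"
        using qp by (simp del: power_Suc)
      then show ?thesis by (metis mult.right_neutral right_diff_distrib)
    qed
    have "g (Suc j) - f (Suc j) = of_real (co q a (Suc j) * q ^ Suc j - co q a (Suc j)) * y ^ Suc j"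
      by (simp add: f_def g_def power_mult_distrib algebra_simps del: co.simps power_Suc)
    also have "\<dots> = of_real a * y * f j"
      unfolding e by (simp add: f_def algebra_simps)
    finally show ?thesis .
  qed
  have sd: "summable (\<lambda>k. g k - f k)" using sf sg by (rule summable_diff[rotated])
  have "ser q a (of_real q * y) - ser q a y = (\<Sum>k. g k - f k)"
    by (simp add: mf mg suminf_diff[OF sg sf])
  also have "\<dots> = (\<Sum>k. g (Suc k) - f (Suc k))"
    using suminf_split_head[OF sd] d0 by simp
  also have "\<dots> = (\<Sum>k. of_real a * y * f k)" by (simp add: dS)
  also have "\<dots> = of_real a * y * suminf f" by (rule suminf_mult[OF sf])
  finally show ?thesis by (simp add: mf algebra_simps)
qed

lemma ser_bound:
  assumes q: "q > 1" and a: "a \<ge> 0" and x: "a * norm y / (q - 1) \<le> 1/2"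
  shows "norm (ser q a y - 1) \<le> 2 * (a * norm y / (q - 1))"
proof -
  define x where "x = a * norm y / (q - 1)"
  define f where "f k = of_real (co q a k) * y ^ k" for k
  have x0: "0 \<le> x" using q a by (simp add: x_def)
  have x1: "x \<le> 1/2" using x by (simp add: x_def)
  have sf: "summable f" unfolding f_def by (rule ser_summable[OF q a])
  have snf: "summable (\<lambda>k. norm (f k))" unfolding f_def by (rule ser_summable_norm[OF q a])
  have snf': "summable (\<lambda>k. norm (f (Suc k)))"
    using snf by (subst summable_Suc_iff)
  have fb: "norm (f k) \<le> x ^ k" for k
  proof -
    have c: "0 \<le> co q a k" "co q a k \<le> (a / (q - 1)) ^ k / fact k" using co_bound[OF q a] by auto
    have "norm (f k) = co q a k * norm y ^ k" using c by (simp add: f_def norm_mult norm_power)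
    also have "\<dots> \<le> (a / (q - 1)) ^ k / fact k * norm y ^ k"
      by (intro mult_right_mono c) simp
    also have "\<dots> \<le> (a / (q - 1)) ^ k * norm y ^ k"
    proof -
      have "0 \<le> (a / (q - 1)) ^ k * norm y ^ k" using q a by simp
      moreover have "(1::real) \<le> fact k" by (rule fact_ge_1)
      ultimately show ?thesis by (simp add: divide_le_eq mult_le_cancel_left1 mult_left_mono)
    qed
    also have "\<dots> = x ^ k" by (simp add: x_def power_mult_distrib power_divide)
    finally show ?thesis .
  qed
  have g: "summable (\<lambda>k. x ^ Suc k)"
    using x0 x1 by (simp add: summable_Suc_iff)
  have "ser q a y - 1 = (\<Sum>k. f (Suc k))"
  proof -
    have "(\<Sum>k. f (Suc k)) = suminf f - f 0" by (rule suminf_split_head[OF sf])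
    moreover have "f 0 = 1" by (simp add: f_def)
    moreover have "ser q a y = suminf f" unfolding ser_def by (rule suminf_cong) (simp add: f_def)
    ultimately show ?thesis by simp
  qed
  then have "norm (ser q a y - 1) \<le> (\<Sum>k. norm (f (Suc k)))"
    using summable_norm[OF snf'] by simp
  also have "\<dots> \<le> (\<Sum>k. x ^ Suc k)"
    by (intro suminf_le fb snf' g)
  also have "\<dots> = x * (\<Sum>k. x ^ k)"
    using suminf_mult[of "\<lambda>k. x ^ k" "x"] x0 x1 by simp
  also have "\<dots> = x / (1 - x)"
    using x0 x1 by (simp add: suminf_geometric)
  also have "\<dots> \<le> x / (1/2)"
    by (rule divide_left_mono) (use x0 x1 in auto)
  also have "\<dots> = 2 * x" by simp
  finally show ?thesis by (simp add: x_def)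
qed

lemma ser_nonzero:
  assumes q: "q > 1" and a: "a \<ge> 0" and x: "a * norm y / (q - 1) < 1/2"
  shows "ser q a y \<noteq> 0"
proof
  assume "ser q a y = 0"
  then have "norm (ser q a y - 1) = 1" by simp
  moreover have "norm (ser q a y - 1) \<le> 2 * (a * norm y / (q - 1))"
    using ser_bound[OF q a] x by simp
  ultimately show False using x by simp
qed

lemma mser_sc_entry_holo:
  assumes q: "q > 1" and a: "a \<ge> 0"
  shows "(\<lambda>z. mser q a (sc z (C::'m::finite cmat)) $ i $ j) holomorphic_on S"
proof -
  define c where "c k = of_real (co q a k) * mpow C k $ i $ j" for k
  have e: "mser q a (sc z C) $ i $ j = (\<Sum>k. c k * z ^ k)" for z
    unfolding mser_entry[OF q a] c_def by (simp add: mpow_sc mult_ac)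
  have s: "summable (\<lambda>k. c k * z ^ k)" for z
  proof (rule summable_comparison_test'[OF mser_summable_norm[OF q a, of "sc z C"]])
    show "norm (c k * z ^ k) \<le> norm (co q a k *\<^sub>R mpow (sc z C) k)" for k
    proof -
      have "c k * z ^ k = (co q a k *\<^sub>R mpow (sc z C) k) $ i $ j"
        by (simp add: c_def mpow_sc) (simp add: scaleR_conv_of_real mult_ac)
      then show ?thesis using norm_entry_le by metis
    qed
  qed
  have "(\<lambda>z. \<Sum>k. c k * z ^ k) holomorphic_on UNIV" by (rule powser_holo[OF s])
  then show ?thesis unfolding e by (rule holomorphic_on_subset) simp
qed



definition ellf :: "real \<Rightarrow> real \<Rightarrow> complex \<Rightarrow> complex" where
  "ellf q c z = ser q q (of_real c * z)"

definition muf :: "real \<Rightarrow> real \<Rightarrow> complex \<Rightarrow> complex" where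
  "muf q c z = ser q 1 (1 / (of_real c * z))"

lemma ellf_feq:
  assumes q: "q > 1"
  shows "ellf q c (of_real q * z) = (1 + of_real (q * c) * z) * ellf q c z"
  using ser_feq[of q q "of_real c * z"] q unfolding ellf_def by (simp add: mult_ac)

lemma muf_feq:
  assumes q: "q > 1"
  shows "muf q c z = (1 + 1 / (of_real (q * c) * z)) * muf q c (of_real q * z)"
proof -
  define y where "y = 1 / (of_real (q * c) * z)"
  have h1: "ser q 1 (of_real q * y) = (1 + y) * ser q 1 y"
    using ser_feq[of q 1 y] q by simp
  have h2: "of_real q * y = 1 / (of_real c * z)"
    using q by (simp add: y_def field_simps)
  have h3: "y = 1 / (of_real c * (of_real q * z))"
    by (simp add: y_def mult_ac)
  show ?thesis unfolding muf_def y_def[symmetric] by (metis h1 h2 h3)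
qed

lemma muf_bound:
  assumes q: "q > 1" and c: "c > 0" and x: "1 / (c * norm z * (q - 1)) \<le> 1/2"
  shows "norm (muf q c z - 1) \<le> 2 * (1 / (c * norm z * (q - 1)))"
proof -
  have e: "1 * norm (1 / (of_real c * z)) / (q - 1) = 1 / (c * norm z * (q - 1))"
    using c by (simp add: norm_divide norm_mult)
  show ?thesis using ser_bound[of q 1 "1 / (of_real c * z)"] q x unfolding muf_def e by simp
qed

lemma muf_nz:
  assumes q: "q > 1" and c: "c > 0" and x: "1 / (c * norm z * (q - 1)) < 1/2"
  shows "muf q c z \<noteq> 0"
proof -
  have e: "1 * norm (1 / (of_real c * z)) / (q - 1) = 1 / (c * norm z * (q - 1))"
    using c by (simp add: norm_divide norm_mult)
  show ?thesis using ser_nonzero[of q 1 "1 / (of_real c * z)"] q x unfolding muf_def e by simp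
qed

lemma ellf_nz:
  assumes q: "q > 1" and c: "c > 0" and x: "q * c * norm z / (q - 1) < 1/2"
  shows "ellf q c z \<noteq> 0"
proof -
  have e: "q * norm (of_real c * z) / (q - 1) = q * c * norm z / (q - 1)"
    using c by (simp add: norm_mult)
  show ?thesis using ser_nonzero[of q q "of_real c * z"] q x unfolding ellf_def e by simp
qed

lemma ellf_0: "ellf q c 0 = 1"
  by (simp add: ellf_def ser_0)

lemma ellf_holo:
  assumes q: "q > 1"
  shows "ellf q c holomorphic_on S"
proof -
  have "(ser q q \<circ> (\<lambda>z. of_real c * z)) holomorphic_on S"
    by (intro holomorphic_on_compose ser_holo) (use q in auto)
  then show ?thesis by (simp add: ellf_def[abs_def] o_def)
qed

lemma muf_holo:
  assumes q: "q > 1" and c: "c \<noteq> 0" and S: "0 \<notin> S"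
  shows "muf q c holomorphic_on S"
proof -
  have "(\<lambda>z. 1 / (of_real c * z)) holomorphic_on S"
    by (intro holomorphic_intros) (use c S in auto)
  then have "(ser q 1 \<circ> (\<lambda>z. 1 / (of_real c * z))) holomorphic_on S"
    by (intro holomorphic_on_compose_gen[OF _ ser_holo[of q 1 UNIV]]) (use q in auto)
  then show ?thesis by (simp add: muf_def[abs_def] o_def)
qed



lemma muf_iter:
  assumes q: "q > 1"
  shows "muf q c z = (\<Prod>i\<in>{1..J}. 1 + 1 / (of_real (c * q ^ i) * z)) * muf q c (of_real (q ^ J) * z)"
proof (induction J)
  case 0 then show ?case by simp
next
  case (Suc J)
  have f: "muf q c (of_real (q ^ J) * z) =
      (1 + 1 / (of_real (c * q ^ Suc J) * z)) * muf q c (of_real (q ^ Suc J) * z)"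
  proof -
    have "muf q c (of_real (q ^ J) * z) = (1 + 1 / (of_real (q * c) * (of_real (q ^ J) * z))) * muf q c (of_real q * (of_real (q ^ J) * z))"
      by (rule muf_feq[OF q])
    moreover have "of_real (q * c) * (of_real (q ^ J) * z) = of_real (c * q ^ Suc J) * z"
      by (simp add: mult_ac)
    moreover have "of_real q * (of_real (q ^ J) * z) = of_real (q ^ Suc J) * z"
      by (simp add: mult_ac)
    ultimately show ?thesis by metis
  qed
  show ?case using Suc f by (simp add: mult_ac del: of_real_mult of_real_power power_Suc)
qed

lemma muf_isCont:
  assumes q: "q > 1" and c: "c > 0" and z: "z \<noteq> 0"
  shows "isCont (muf q c) z"
proof -
  have "continuous_on (-{0}) (muf q c)"
    by (rule holomorphic_on_imp_continuous_on[OF muf_holo]) (use q c in auto)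
  then show ?thesis using z continuous_on_eq_continuous_at[of "-{0}"] by auto
qed

definition Zset :: "real \<Rightarrow> real \<Rightarrow> complex set" where
  "Zset q c = range (\<lambda>j. - 1 / complex_of_real (c * q ^ Suc j))"

lemma muf_far_nz:
  assumes q: "q > 1" and c: "c > 0" and z: "z \<noteq> 0"
  shows "\<exists>J. muf q c (of_real (q ^ J) * z) \<noteq> 0"
proof -
  obtain J where J: "4 / (c * norm z * (q - 1)) < q ^ J" using real_arch_pow[OF q] by blast
  have pos: "c * norm z * (q - 1) > 0" using q c z by simp
  have "1 / (c * norm (of_real (q ^ J) * z) * (q - 1)) < 1/2"
  proof -
    have "norm (of_real (q ^ J) * z) = q ^ J * norm z" using q by (simp add: norm_mult del: of_real_power)
    moreover have "4 < q ^ J * (c * norm z * (q - 1))" using J pos by (simp add: field_simps)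
    ultimately show ?thesis using pos by (simp add: field_simps)
  qed
  then show ?thesis using muf_nz[OF q c] by blast
qed

lemma muf_zero:
  assumes q: "q > 1" and c: "c > 0" and z: "z \<noteq> 0" and m: "muf q c z = 0"
  shows "z \<in> Zset q c"
proof -
  obtain J where J: "muf q c (of_real (q ^ J) * z) \<noteq> 0" using muf_far_nz[OF q c z] by blast
  have "(\<Prod>i\<in>{1..J}. 1 + 1 / (of_real (c * q ^ i) * z)) = 0"
    using muf_iter[OF q, of c z J] m J by simp
  then obtain i where i: "i \<in> {1..J}" "1 + 1 / (of_real (c * q ^ i) * z) = 0" by auto
  have cq: "of_real (c * q ^ i) \<noteq> (0::complex)" using c q by simp
  have "(of_real (c * q ^ i) * z) * (1 + 1 / (of_real (c * q ^ i) * z)) = of_real (c * q ^ i) * z + 1"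
    using z cq by (simp add: field_simps)
  then have "of_real (c * q ^ i) * z + 1 = 0" using i(2) by simp
  then have "of_real (c * q ^ i) * z = -1" by (simp add: eq_neg_iff_add_eq_0)
  then have zz: "z = - 1 / of_real (c * q ^ i)" using cq by (simp add: field_simps)
  obtain j where "i = Suc j" using i(1) by (cases i) auto
  then show ?thesis using zz unfolding Zset_def by blast
qed

lemma Zset_nz: assumes "c > 0" "q > 1" shows "0 \<notin> Zset q c"
  using assms unfolding Zset_def by auto

lemma Zset_q:
  assumes q: "q > 1" and c: "c > 0" and z: "of_real q * z \<in> Zset q c"
  shows "z \<in> Zset q c"
proof -
  obtain j where j: "of_real q * z = - 1 / complex_of_real (c * q ^ Suc j)" using z unfolding Zset_def by blast
  have "z = - 1 / complex_of_real (c * q ^ Suc (Suc j))"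
  proof -
    have "z = (of_real q * z) / of_real q" using q by simp
    also have "\<dots> = - 1 / complex_of_real (c * q ^ Suc (Suc j))"
      unfolding j using q c by (simp add: field_simps)
    finally show ?thesis .
  qed
  then show ?thesis unfolding Zset_def by blast
qed

lemma Zset_sep:
  assumes q: "q > 1" and c: "c > 0" and z: "z \<noteq> 0"
  shows "\<exists>e>0. \<forall>w\<in>Zset q c. w \<noteq> z \<longrightarrow> e \<le> dist w z"
proof -
  obtain J where J: "2 / (c * norm z) < q ^ J" using real_arch_pow[OF q] by blast
  define F where "F = (\<lambda>j. - 1 / complex_of_real (c * q ^ Suc j)) ` {..<J}"
  have fF: "finite F" unfolding F_def by simp
  obtain d where d: "d > 0" "\<forall>x\<in>F. x \<noteq> z \<longrightarrow> d \<le> dist z x"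
    using finite_set_avoid[OF fF, of z] by blast
  have far: "norm z / 2 \<le> dist w z" if w1: "w \<in> Zset q c" and w2: "w \<notin> F" for w
  proof -
    obtain j where j: "w = - 1 / complex_of_real (c * q ^ Suc j)" using w1 unfolding Zset_def by blast
    have jJ: "j \<ge> J" using w2 j unfolding F_def by (metis image_eqI lessThan_iff not_le)
    have pos: "c * norm z > 0" using c z by simp
    have "q ^ J \<le> q ^ Suc j" using q jJ by (intro power_increasing) auto
    then have qq: "2 / (c * norm z) < q ^ Suc j" using J by linarith
    have "norm w = 1 / (c * q ^ Suc j)" using j c q by (simp add: norm_divide norm_minus_cancel del: of_real_mult of_real_power power_Suc)
    also have "\<dots> \<le> norm z / 2"
      using qq pos c q by (simp add: field_simps)
    finally have "norm w \<le> norm z / 2" .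
    then show ?thesis using norm_triangle_ineq2[of z w] by (simp add: dist_norm norm_minus_commute)
  qed
  show ?thesis
  proof (intro exI[of _ "min d (norm z / 2)"] conjI ballI impI)
    show "0 < min d (norm z / 2)" using d z by simp
    fix w assume w: "w \<in> Zset q c" "w \<noteq> z"
    show "min d (norm z / 2) \<le> dist w z"
    proof (cases "w \<in> F")
      case True
      then have "d \<le> dist w z" using d w by (simp add: dist_commute)
      then show ?thesis by linarith
    next
      case False
      then have "norm z / 2 \<le> dist w z" using far w by blast
      then show ?thesis by linarith
    qed
  qed
qed

lemma factor_lim:
  fixes p :: complex and a :: real
  assumes p: "p \<noteq> 0" and a: "a \<noteq> 0"
  shows "\<exists>l. ((\<lambda>w. (w - p) / (1 + 1 / (of_real a * w))) \<longlongrightarrow> l) (at p)"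
proof (cases "1 + 1 / (of_real a * p) = 0")
  case False
  have "((\<lambda>w. (w - p) / (1 + 1 / (of_real a * w))) \<longlongrightarrow> (p - p) / (1 + 1 / (of_real a * p))) (at p)"
    by (intro tendsto_intros) (use False p a in auto)
  then show ?thesis by blast
next
  case True
  then have ap: "of_real a * p = -1" using p a by (simp add: field_simps add_eq_0_iff)
  have ev1: "eventually (\<lambda>w. w \<noteq> 0) (at p)"
    by (rule tendsto_imp_eventually_ne[OF tendsto_ident_at p])
  have ev2: "eventually (\<lambda>w. w \<noteq> p) (at p)"
    unfolding eventually_at by (intro exI[of _ 1]) auto
  have "eventually (\<lambda>w. w = (w - p) / (1 + 1 / (of_real a * w))) (at p)"
    using ev1 ev2
  proof eventually_elim
    case (elim w)
    have "1 + 1 / (of_real a * w) = (of_real a * w - of_real a * p) / (of_real a * w)"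
      using elim a ap by (simp add: field_simps)
    also have "\<dots> = (w - p) / w" using a elim by (simp add: field_simps)
    finally have eq: "1 + 1 / (of_real a * w) = (w - p) / w" .
    show ?case unfolding eq using elim by (simp add: field_simps)
  qed
  then have "((\<lambda>w. (w - p) / (1 + 1 / (of_real a * w))) \<longlongrightarrow> p) (at p)"
    by (rule tendsto_cong[THEN iffD1, OF _ tendsto_ident_at])
  then show ?thesis by blast
qed

lemma muf_lim:
  assumes q: "q > 1" and c: "c > 0" and p: "p \<noteq> 0"
  shows "\<exists>J l. ((\<lambda>w. (w - p) ^ J / muf q c w) \<longlongrightarrow> l) (at p)"
proof -
  obtain J where J: "muf q c (of_real (q ^ J) * p) \<noteq> 0" using muf_far_nz[OF q c p] by blast
  define h where "h i w = (w - p) / (1 + 1 / (of_real (c * q ^ i) * w))" for i w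
  have "\<forall>i\<in>{1..J}. \<exists>l. (h i \<longlongrightarrow> l) (at p)"
  proof
    fix i
    show "\<exists>l. (h i \<longlongrightarrow> l) (at p)"
      unfolding h_def by (rule factor_lim[OF p]) (use c q in simp)
  qed
  then obtain L where L: "\<And>i. i \<in> {1..J} \<Longrightarrow> (h i \<longlongrightarrow> L i) (at p)" by metis
  have c2: "isCont (\<lambda>w. muf q c (of_real (q ^ J) * w)) p"
    by (rule isCont_o2[OF _ muf_isCont[OF q c]]) (use q p in auto)
  have t: "((\<lambda>w. (\<Prod>i\<in>{1..J}. h i w) * (1 / muf q c (of_real (q ^ J) * w)))
      \<longlongrightarrow> (\<Prod>i\<in>{1..J}. L i) * (1 / muf q c (of_real (q ^ J) * p))) (at p)"
    by (intro tendsto_mult tendsto_prod L tendsto_divide tendsto_const)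
       (use c2 J in \<open>auto simp: isCont_def\<close>)
  have e: "(w - p) ^ J / muf q c w = (\<Prod>i\<in>{1..J}. h i w) * (1 / muf q c (of_real (q ^ J) * w))" for w
  proof -
    have "(w - p) ^ J = (\<Prod>i\<in>{1..J}. w - p)" by simp
    then show ?thesis
      unfolding h_def prod_dividef muf_iter[OF q, of c w J] by simp
  qed
  show ?thesis using t unfolding e[symmetric] by blast
qed



lemma pow_near1:
  fixes x :: complex
  assumes "norm x \<le> 1"
  shows "norm ((1 + x) ^ j - 1) \<le> (2 ^ j - 1) * norm x"
proof (induction j)
  case 0 then show ?case by simp
next
  case (Suc j)
  have "(1 + x) ^ Suc j - 1 = (1 + x) * ((1 + x) ^ j - 1) + x" by (simp add: algebra_simps)
  then have "norm ((1 + x) ^ Suc j - 1) \<le> norm (1 + x) * norm ((1 + x) ^ j - 1) + norm x"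
    by (metis norm_mult norm_triangle_ineq)
  also have "\<dots> \<le> 2 * ((2 ^ j - 1) * norm x) + norm x"
  proof -
    have "norm (1 + x) \<le> 2" using assms norm_triangle_ineq[of 1 x] by simp
    then show ?thesis by (intro add_mono mult_mono Suc) auto
  qed
  also have "\<dots> = (2 ^ Suc j - 1) * norm x" by (simp add: algebra_simps)
  finally show ?case .
qed

lemma powi_near1:
  fixes x :: complex
  assumes x: "norm x \<le> 1/2"
  shows "norm ((1 + x) powi m - 1) \<le> 4 ^ nat \<bar>m\<bar> * norm x"
proof (cases "m \<ge> 0")
  case True
  then have "(1 + x) powi m = (1 + x) ^ nat m" by (simp add: power_int_def)
  moreover have "norm ((1 + x) ^ nat m - 1) \<le> (2 ^ nat m - 1) * norm x"
    using pow_near1 x by simp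
  moreover have "(2 ^ nat m - 1) * norm x \<le> 4 ^ nat \<bar>m\<bar> * norm x"
  proof -
    have "(2::real) ^ nat m \<le> 4 ^ nat m" by (intro power_mono) auto
    then show ?thesis using True by (intro mult_right_mono) auto
  qed
  ultimately show ?thesis by simp
next
  case False
  define j where "j = nat (- m)"
  have pj: "(1 + x) powi m = 1 / (1 + x) ^ j" using False by (simp add: power_int_def j_def field_simps)
  have n1x: "norm (1 + x) \<ge> 1/2"
    using norm_triangle_ineq2[of 1 "-x"] x by simp
  have nz: "(1 + x) ^ j \<noteq> 0" using n1x by auto
  have npow: "norm ((1 + x) ^ j) \<ge> (1/2) ^ j" unfolding norm_power by (intro power_mono n1x) simp
  have "1 / (1 + x) ^ j - 1 = - ((1 + x) ^ j - 1) / (1 + x) ^ j" using nz by (simp add: field_simps)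
  then have "norm (1 / (1 + x) ^ j - 1) = norm ((1 + x) ^ j - 1) / norm ((1 + x) ^ j)"
    by (simp add: norm_divide norm_minus_commute)
  also have "\<dots> \<le> ((2 ^ j - 1) * norm x) / (1/2) ^ j"
    by (intro frac_le pow_near1) (use x npow in auto)
  also have "\<dots> \<le> (2 ^ j * norm x) * 2 ^ j" by (simp add: power_one_over mult_right_mono)
  also have "\<dots> = 4 ^ j * norm x" by (simp add: power_mult_distrib[symmetric] mult_ac)
  finally show ?thesis using pj False by (simp add: j_def)
qed

lemma matrix_inv_prop:
  assumes "invertible (X::'a::semiring_1^'n^'n)"
  shows "X ** matrix_inv X = mat 1 \<and> matrix_inv X ** X = mat 1"
  using assms unfolding invertible_def matrix_inv_def by (rule someI_ex)

lemma near_id_invertible: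
  fixes X :: "'m::finite cmat"
  assumes a: "real CARD('m) ^ 2 * norm (X - mat 1) < 1"
  shows "invertible X"
proof -
  have inj: "inj ((*v) X)"
  proof (rule injI)
    fix x y :: "complex^'m"
    assume xy: "X *v x = X *v y"
    define v where "v = x - y"
    have Xv: "X *v v = 0" using xy by (simp add: v_def matrix_vector_mult_diff_distrib)
    have "v = (mat 1 - X) *v v" using Xv by (simp add: matrix_vector_mult_diff_rdistrib)
    then have "norm v \<le> real CARD('m) ^ 2 * norm (mat 1 - X) * norm v"
      by (metis norm_mvmult)
    moreover have "norm (mat 1 - X) = norm (X - mat 1)" by (rule norm_minus_commute)
    ultimately have "norm v \<le> (real CARD('m) ^ 2 * norm (X - mat 1)) * norm v" by simp
    then have "norm v = 0" using a
      by (metis mult_le_cancel_right1 norm_ge_zero not_less order.order_iff_strict)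
    then show "x = y" by (simp add: v_def)
  qed
  have "det (matrix ((*v) X)) \<noteq> 0"
    using det_nz_iff_inj_gen[OF matrix_vector_mul_linear_gen[of X]] inj by simp
  then show ?thesis using invertible_det_nz by (metis matrix_of_matrix_vector_mul)
qed

lemma right_inv_bound:
  fixes B Y :: "'m::finite cmat"
  assumes e: "(mat 1 + B) ** Y = mat 1" and b: "real CARD('m) ^ 3 * norm B \<le> 1/2"
  shows "norm Y \<le> 2 * norm (mat 1 :: 'm cmat)"
proof -
  have "Y = mat 1 - B ** Y" using e by (simp add: mm_add_rdistrib algebra_simps)
  then have "norm Y \<le> norm (mat 1 :: 'm cmat) + norm (B ** Y)"
    by (metis norm_triangle_ineq4)
  also have "\<dots> \<le> norm (mat 1 :: 'm cmat) + real CARD('m) ^ 3 * norm B * norm Y"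
    using norm_mmult[of B Y] by simp
  also have "\<dots> \<le> norm (mat 1 :: 'm cmat) + 1/2 * norm Y"
    by (intro add_left_mono mult_right_mono b) simp
  finally show ?thesis by simp
qed



lemma sc_sc_mult: "sc a X ** sc b Y = sc (a * b) (X ** Y)"
  by (simp add: sc_mult_left sc_mult_right sc_sc mult.commute)

lemma mat_mult_sc: "mat c ** Y = sc c (Y::'m::finite cmat)"
  by (metis matrix_mul_lid sc_mat sc_mult_left)

lemma mult_mat_sc: "Y ** mat c = sc c (Y::'m::finite cmat)"
  by (metis matrix_mul_rid sc_mat sc_mult_right)

lemma yfeq:
  assumes q: "q > 1" and c: "c > 0" and z: "z \<noteq> 0"
  shows "ellf q c (of_real q * z) * muf q c (of_real q * z)
       = of_real (q * c) * z * (ellf q c z * muf q c z)"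
proof -
  have nz: "of_real (q * c) * z \<noteq> 0" using q c z by simp
  have "ellf q c (of_real q * z) * muf q c (of_real q * z) = (1 + of_real (q * c) * z) * ellf q c z * muf q c (of_real q * z)"
    by (simp add: ellf_feq[OF q])
  also have "\<dots> = of_real (q * c) * z * (ellf q c z * ((1 + 1 / (of_real (q * c) * z)) * muf q c (of_real q * z)))"
    using nz by (simp add: field_simps)
  also have "\<dots> = of_real (q * c) * z * (ellf q c z * muf q c z)"
    by (simp only: muf_feq[OF q, of c z, symmetric])
  finally show ?thesis .
qed

lemma main_alg:
  fixes C D A0 :: "'m::finite cmat"
  assumes q: "q > 1" and s: "s > 0" and u: "u > 0" and t: "t > 0" and z: "z \<noteq> 0"
    and C: "C = t *\<^sub>R A0" and CD: "C ** D = mat 1" and DC: "D ** C = mat 1"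
    and uu: "u = (q * s) powi n * t"
  defines "E \<equiv> \<lambda>w. sc (ellf q s w powi n / ellf q u w) (mser q q (sc w C))"
    and "F \<equiv> \<lambda>w. sc (muf q s w powi n / muf q u w) (mser q 1 (sc (1 / w) D))"
  shows "E (of_real q * z) ** F (of_real q * z) = mat (z powi n) ** A0 ** (E z ** F z)
     \<and> mat (z powi n) ** A0 ** (E z ** F z) = (E z ** F z) ** A0 ** mat (z powi n)"
proof -
  define L where "L w = mser q q (sc w C)" for w
  define M where "M w = mser q 1 (sc (1 / w) D)" for w
  define y where "y c w = ellf q c w * muf q c w" for c w
  define G where "G w = y s w powi n / y u w" for w
  have q0: "q > 0" "q \<noteq> 0" using q by auto
  have EF: "E w ** F w = sc (G w) (L w ** M w)" for w
    by (simp add: E_def F_def sc_sc_mult G_def y_def L_def M_def power_int_mult_distrib)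
  have qz: "of_real q * z \<noteq> 0" using q z by simp
  have Gq: "G (of_real q * z) * (of_real (q * t) * z) = G z * z powi n"
  proof -
    have ys: "y s (of_real q * z) = of_real (q * s) * z * y s z" unfolding y_def by (rule yfeq[OF q s z])
    have yu: "y u (of_real q * z) = of_real (q * u) * z * y u z" unfolding y_def by (rule yfeq[OF q u z])
    have qs: "of_real ((q * s) powi n) \<noteq> (0::complex)" using q s by simp
    have qt: "of_real (q * t) * z \<noteq> 0" using q t z by simp
    have "G (of_real q * z) = (of_real (q * s) * z) powi n * y s z powi n / (of_real (q * u) * z * y u z)"
      by (simp add: G_def ys yu power_int_mult_distrib)
    also have "(of_real (q * s) * z) powi n = of_real ((q * s) powi n) * z powi n"
      by (simp add: power_int_mult_distrib)
    also have "of_real (q * u) * z * y u z = of_real ((q * s) powi n) * ((of_real (q * t) * z) * y u z)"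
      by (simp add: uu mult_ac)
    finally have "G (of_real q * z) = z powi n * y s z powi n / ((of_real (q * t) * z) * y u z)"
      by (simp only: mult.assoc nonzero_mult_divide_mult_cancel_left[OF qs])
    then have "G (of_real q * z) * (of_real (q * t) * z) = ((of_real (q * t) * z) * (z powi n * y s z powi n)) / ((of_real (q * t) * z) * y u z)"
      by (simp add: mult.commute)
    also have "\<dots> = (z powi n * y s z powi n) / y u z"
      using qt by (rule nonzero_mult_divide_mult_cancel_left)
    finally have "G (of_real q * z) * (of_real (q * t) * z) = z powi n * (y s z powi n / y u z)"
      by simp
    then show ?thesis by (simp add: G_def mult.commute)
  qed
  define B where "B = sc (of_real q * z) C"
  define B' where "B' = sc (1 / (of_real q * z)) D"
  have Lq: "L (of_real q * z) = (mat 1 + B) ** L z"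
  proof -
    have "sc (of_real q * z) C = q *\<^sub>R sc z C" by (simp add: sc_real[symmetric] sc_sc)
    then show ?thesis
      unfolding L_def B_def using mser_feq[OF q, of q "sc z C"] q
      by (simp add: mm_add_rdistrib mm_scaleR_left)
  qed
  have Mz: "M z = (mat 1 + B') ** M (of_real q * z)"
  proof -
    have "sc (1 / z) D = q *\<^sub>R B'" unfolding B'_def using q by (simp add: sc_real[symmetric] sc_sc)
    then show ?thesis
      unfolding M_def B'_def using mser_feq[OF q, of 1 "sc (1 / (of_real q * z)) D"]
      by (simp add: mm_add_rdistrib)
  qed
  have BL: "B ** L z = L z ** B"
    unfolding L_def B_def by (rule mser_comm[OF q]) (use q in \<open>auto simp: sc_sc_mult mult.commute\<close>)
  have BB': "B ** B' = mat 1"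
    unfolding B_def B'_def using qz by (simp add: sc_sc_mult CD sc_mat)
  have LMq: "L (of_real q * z) ** M (of_real q * z) = B ** (L z ** M z)"
  proof -
    have "B ** (L z ** M z) = (B ** L z) ** (mat 1 + B') ** M (of_real q * z)"
      by (simp add: Mz matrix_mul_assoc)
    also have "\<dots> = L z ** (B ** (mat 1 + B')) ** M (of_real q * z)"
      by (simp add: BL matrix_mul_assoc)
    also have "B ** (mat 1 + B') = B + mat 1" by (simp add: matrix_add_ldistrib BB')
    also have "L z ** (B + mat 1) = (mat 1 + B) ** L z"
      by (simp add: matrix_add_ldistrib mm_add_rdistrib BL add.commute)
    finally show ?thesis by (simp add: Lq)
  qed
  have A0C: "A0 ** C = C ** A0" by (simp add: C mm_scaleR_left mm_scaleR_right)
  have A0D: "A0 ** D = D ** A0"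
  proof -
    have tt: "t \<noteq> 0" using t by simp
    have "A0 = (1 / t) *\<^sub>R C" using tt by (simp add: C)
    then show ?thesis by (simp add: mm_scaleR_left mm_scaleR_right CD DC)
  qed
  have AL: "A0 ** L z = L z ** A0"
    unfolding L_def by (rule mser_comm[OF q]) (use q in \<open>auto simp: sc_mult_left sc_mult_right A0C\<close>)
  have AM: "A0 ** M z = M z ** A0"
    unfolding M_def by (rule mser_comm) (use q in \<open>auto simp: sc_mult_left sc_mult_right A0D\<close>)
  have ALM: "A0 ** (L z ** M z) = (L z ** M z) ** A0"
    by (metis AL AM matrix_mul_assoc)
  have BA: "B = sc (of_real q * z * of_real t) A0"
    by (simp add: B_def C sc_real[symmetric] sc_sc)
  have 1: "E (of_real q * z) ** F (of_real q * z) = sc (G z * z powi n) (A0 ** (L z ** M z))"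
  proof -
    have "E (of_real q * z) ** F (of_real q * z) = sc (G (of_real q * z)) (B ** (L z ** M z))"
      by (simp add: EF LMq)
    also have "\<dots> = sc (G (of_real q * z) * (of_real (q * t) * z)) (A0 ** (L z ** M z))"
      by (simp add: BA sc_mult_left sc_sc mult_ac)
    finally show ?thesis by (simp only: Gq)
  qed
  have 2: "mat (z powi n) ** A0 ** (E z ** F z) = sc (G z * z powi n) (A0 ** (L z ** M z))"
    by (simp add: EF mat_mult_sc sc_mult_left sc_mult_right sc_sc mult.commute)
  have 3: "(E z ** F z) ** A0 ** mat (z powi n) = sc (G z * z powi n) (A0 ** (L z ** M z))"
    by (simp add: EF mult_mat_sc sc_mult_left sc_mult_right sc_sc mult.commute ALM)
  show ?thesis using 1 2 3 by simp
qed



lemma g_est: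
  fixes a b :: complex
  assumes a: "norm (a - 1) \<le> e" and b: "norm (b - 1) \<le> e" and e: "e \<le> 1/4"
  shows "norm (a powi n / b - 1) \<le> 2 * (4 ^ nat \<bar>n\<bar> + 1) * e \<and> b \<noteq> 0"
proof -
  have e0: "0 \<le> e" using a norm_ge_zero order_trans by blast
  have an: "norm (a powi n - 1) \<le> 4 ^ nat \<bar>n\<bar> * e"
  proof -
    have "norm ((1 + (a - 1)) powi n - 1) \<le> 4 ^ nat \<bar>n\<bar> * norm (a - 1)"
      by (rule powi_near1) (use a e in auto)
    also have "\<dots> \<le> 4 ^ nat \<bar>n\<bar> * e" by (intro mult_left_mono a) auto
    finally show ?thesis by simp
  qed
  have nb: "norm b \<ge> 1/2" using norm_triangle_ineq2[of 1 "1 - b"] b e by (simp add: norm_minus_commute)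
  then have b0: "b \<noteq> 0" by auto
  have "a powi n / b - 1 = (a powi n - 1 + (1 - b)) / b" using b0 by (simp add: field_simps)
  then have "norm (a powi n / b - 1) = norm (a powi n - 1 + (1 - b)) / norm b" by (simp add: norm_divide)
  also have "\<dots> \<le> (4 ^ nat \<bar>n\<bar> * e + e) / (1/2)"
  proof (rule frac_le)
    show "norm (a powi n - 1 + (1 - b)) \<le> 4 ^ nat \<bar>n\<bar> * e + e"
      using norm_triangle_ineq[of "a powi n - 1" "1 - b"] an b by (simp add: norm_minus_commute)
  qed (use e0 nb in auto)
  also have "\<dots> = 2 * (4 ^ nat \<bar>n\<bar> + 1) * e" by (simp add: algebra_simps)
  finally show ?thesis using b0 by simp
qed

lemma r_est:
  fixes w1 w2 :: complex
  assumes w1: "norm w1 \<le> e" and w2: "norm w2 \<le> e" and e: "e \<le> 1/4"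
  shows "norm ((1 + w1) powi (- n) * (1 + w2) - 1) \<le> (1 + 2 * 4 ^ nat \<bar>n\<bar>) * e"
proof -
  define a where "a = (1 + w1) powi (- n)"
  have e0: "0 \<le> e" using w1 norm_ge_zero order_trans by blast
  have a1: "norm (a - 1) \<le> 4 ^ nat \<bar>n\<bar> * e"
  proof -
    have "norm (a - 1) \<le> 4 ^ nat \<bar>-n\<bar> * norm w1" unfolding a_def by (rule powi_near1) (use w1 e in auto)
    also have "\<dots> = 4 ^ nat \<bar>n\<bar> * norm w1" by simp
    also have "\<dots> \<le> 4 ^ nat \<bar>n\<bar> * e" by (intro mult_left_mono w1) auto
    finally show ?thesis .
  qed
  have na: "norm a \<le> 1 + 4 ^ nat \<bar>n\<bar>"
  proof -
    have "norm a \<le> 1 + norm (a - 1)" using norm_triangle_ineq[of 1 "a - 1"] by simp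
    also have "\<dots> \<le> 1 + 4 ^ nat \<bar>n\<bar> * e" using a1 by simp
    also have "\<dots> \<le> 1 + 4 ^ nat \<bar>n\<bar>" using e by (intro add_left_mono mult_left_le) auto
    finally show ?thesis .
  qed
  have "a * (1 + w2) - 1 = a * w2 + (a - 1)" by (simp add: algebra_simps)
  then have "norm (a * (1 + w2) - 1) \<le> norm a * norm w2 + norm (a - 1)"
    by (metis norm_mult norm_triangle_ineq)
  also have "\<dots> \<le> (1 + 4 ^ nat \<bar>n\<bar>) * e + 4 ^ nat \<bar>n\<bar> * e"
    by (intro add_mono mult_mono na w2 a1) auto
  also have "\<dots> = (1 + 2 * 4 ^ nat \<bar>n\<bar>) * e" by (simp add: algebra_simps)
  finally show ?thesis by (simp add: a_def)
qed

lemma muf_est: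
  assumes q: "q > 1" and c: "c > 0" and hc: "1 / (c * (q - 1)) \<le> \<beta>"
    and r: "r > 0" and w: "r \<le> norm w" and br: "\<beta> / r \<le> 1/4"
  shows "norm (muf q c w - 1) \<le> 2 * (\<beta> / r) \<and> muf q c w \<noteq> 0
         \<and> norm (1 / (of_real (q * c) * w)) \<le> (q - 1) * (\<beta> / r)"
proof -
  have w0: "norm w > 0" using r w by linarith
  have h: "1 / (c * norm w * (q - 1)) \<le> \<beta> / r"
  proof -
    have "1 / (c * norm w * (q - 1)) = (1 / (c * (q - 1))) / norm w" by (simp add: field_simps)
    also have "\<dots> \<le> \<beta> / norm w" by (intro divide_right_mono hc) simp
    also have "\<dots> \<le> \<beta> / r"
    proof -
      have b0: "\<beta> \<ge> 0" using hc c q by (metis le_divide_eq_1_pos less_eq_real_def mult_pos_pos order_trans zero_le_divide_1_iff zero_less_one diff_gt_0_iff_gt)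
      show ?thesis by (intro divide_left_mono b0 w) (use r w0 in auto)
    qed
    finally show ?thesis .
  qed
  have 1: "norm (muf q c w - 1) \<le> 2 * (\<beta> / r)"
    using muf_bound[OF q c, of w] h br by simp
  have 2: "muf q c w \<noteq> 0" using muf_nz[OF q c, of w] h br by simp
  have "norm (1 / (of_real (q * c) * w)) = (q - 1) * (1 / (c * norm w * (q - 1))) / q"
    using q c w0 by (simp add: norm_divide norm_mult field_simps)
  also have "\<dots> \<le> (q - 1) * (1 / (c * norm w * (q - 1))) / 1"
    by (rule divide_left_mono) (use q c w0 in auto)
  also have "\<dots> \<le> (q - 1) * (\<beta> / r)" unfolding div_by_1 by (intro mult_left_mono h) (use q in auto)
  finally show ?thesis using 1 2 by simp
qed



definition F2g :: "real \<Rightarrow> real \<Rightarrow> real \<Rightarrow> int \<Rightarrow> ('m::finite) cmat \<Rightarrow> complex \<Rightarrow> 'm cmat" where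
  "F2g q T u n D w = sc (muf q T w powi n / muf q u w) (mser q 1 (sc (1 / w) D))"

lemma mser_zero: "mser q a (0::'m::finite cmat) = mat 1"
proof -
  have "(\<lambda>k. co q a k *\<^sub>R mpow (0::'m cmat) k) sums (\<Sum>k<1. co q a k *\<^sub>R mpow (0::'m cmat) k)"
  proof (rule sums_finite)
    show "co q a k *\<^sub>R mpow (0::'m cmat) k = 0" if "k \<notin> {..<1}" for k
      using that by (cases k) auto
  qed auto
  then show ?thesis unfolding mser_def by (simp add: sums_iff)
qed

lemma norm_sc1_bound:
  fixes M :: "'m::finite cmat"
  shows "norm (sc g M - mat 1) \<le> norm g * norm (M - mat 1) + norm (g - 1) * norm (mat 1 :: 'm cmat)"
proof -
  have "sc g M - mat 1 = sc g (M - mat 1) + sc (g - 1) (mat 1)"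
    by (simp add: vec_eq_iff mat_def algebra_simps)
  then show ?thesis by (metis norm_sc norm_triangle_ineq)
qed

lemma F2_est:
  fixes D :: "'m::finite cmat"
  assumes q: "q > 1" and T: "T > 0" and u: "u > 0"
    and hT: "1 / (T * (q - 1)) \<le> \<beta>" and hu: "1 / (u * (q - 1)) \<le> \<beta>"
    and hD: "norm D \<le> (q - 1) * \<beta>"
    and r: "r > 0" and z: "r \<le> norm z"
    and e: "real CARD('m) ^ 3 * (\<beta> / r) \<le> 1/8"
  defines "e \<equiv> \<beta> / r" and "\<kappa> \<equiv> real CARD('m) ^ 3" and "n1 \<equiv> norm (mat 1 :: 'm cmat)"
  shows "norm (F2g q T u n D z - mat 1) \<le> n1 * (2 + 6 * (4 ^ nat \<bar>n\<bar> + 1)) * (\<kappa> * e)"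
proof -
  have k1: "\<kappa> \<ge> 1" unfolding \<kappa>_def by (rule kap_ge1)
  have b0: "\<beta> > 0"
  proof -
    have "0 < 1 / (T * (q - 1))" using T q by simp
    then show "\<beta> > 0" using hT by linarith
  qed
  have e0: "e \<ge> 0" using b0 r by (simp add: e_def)
  have e8: "\<kappa> * e \<le> 1/8" using e by (simp add: e_def \<kappa>_def)
  have e8': "e \<le> 1/8" using e8 k1 e0 by (meson mult_le_cancel_right1 order_trans not_le mult_left_le_one_le)
  have mT: "norm (muf q T z - 1) \<le> 2 * e" and mu: "norm (muf q u z - 1) \<le> 2 * e"
  proof -
    have e4: "\<beta> / r \<le> 1/4" using e8' unfolding e_def by linarith
    show "norm (muf q T z - 1) \<le> 2 * e" using muf_est[OF q T hT r z e4] by (simp add: e_def)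
    show "norm (muf q u z - 1) \<le> 2 * e" using muf_est[OF q u hu r z e4] by (simp add: e_def)
  qed
  define g where "g = muf q T z powi n / muf q u z"
  define Cn where "Cn = 2 * (4 ^ nat \<bar>n\<bar> + 1 :: real)"
  have g1: "norm (g - 1) \<le> Cn * (2 * e)"
    using g_est[OF mT mu] e8' by (simp add: g_def Cn_def)
  have ng: "norm g \<le> 1 + Cn * (2 * e)"
    using norm_triangle_ineq[of 1 "g - 1"] g1 by simp
  define M where "M = mser q 1 (sc (1 / z) D)"
  have z0: "norm z > 0" using r z by linarith
  have xM: "1 * \<kappa> * norm (sc (1 / z) D) / (q - 1) \<le> \<kappa> * e"
  proof -
    have "norm (sc (1 / z) D) = norm D / norm z" by (simp add: norm_sc norm_divide)
    also have "\<dots> \<le> (q - 1) * \<beta> / r" by (intro frac_le hD z) (use r q z0 e0 b0 in auto)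
    finally have "norm (sc (1 / z) D) / (q - 1) \<le> \<beta> / r" using q by (simp add: field_simps)
    then have "\<kappa> * (norm (sc (1 / z) D) / (q - 1)) \<le> \<kappa> * (\<beta> / r)"
      using k1 by (intro mult_left_mono) auto
    then show ?thesis by (simp add: e_def)
  qed
  have Mb: "norm (M - mat 1) \<le> 2 * n1 * (\<kappa> * e)"
  proof -
    have "norm (M - mat 1) \<le> 2 * n1 * (1 * \<kappa> * norm (sc (1 / z) D) / (q - 1))"
      unfolding M_def n1_def \<kappa>_def by (rule mser_bound[OF q]) (use xM e8 in \<open>auto simp: \<kappa>_def\<close>)
    also have "\<dots> \<le> 2 * n1 * (\<kappa> * e)" by (intro mult_left_mono xM) (auto simp: n1_def)
    finally show ?thesis .
  qed
  have n10: "n1 \<ge> 0" by (simp add: n1_def)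
  have Cn0: "Cn \<ge> 0" by (simp add: Cn_def)
  have "norm (F2g q T u n D z - mat 1) \<le> norm g * norm (M - mat 1) + norm (g - 1) * n1"
    unfolding F2g_def g_def[symmetric] M_def[symmetric] n1_def by (rule norm_sc1_bound)
  also have "\<dots> \<le> (1 + Cn * (2 * e)) * (2 * n1 * (\<kappa> * e)) + Cn * (2 * e) * n1"
    by (intro add_mono mult_mono ng Mb g1) (use n10 Cn0 e0 in auto)
  also have "\<dots> \<le> n1 * (2 + 3 * Cn) * (\<kappa> * e)"
  proof -
    have a: "Cn * (2 * e) * (2 * n1 * (\<kappa> * e)) \<le> Cn * n1 * (\<kappa> * e)"
    proof -
      have "Cn * (2 * e) * (2 * n1 * (\<kappa> * e)) = (4 * e) * (Cn * n1 * (\<kappa> * e))" by (simp add: algebra_simps)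
      also have "\<dots> \<le> 1 * (Cn * n1 * (\<kappa> * e))"
        by (intro mult_right_mono) (use e8' Cn0 n10 k1 e0 in auto)
      finally show ?thesis by simp
    qed
    have b: "Cn * (2 * e) * n1 \<le> 2 * Cn * n1 * (\<kappa> * e)"
    proof -
      have "e \<le> \<kappa> * e" using k1 e0 by (simp add: mult_le_cancel_right1)
      then have "(Cn * n1) * e \<le> (Cn * n1) * (\<kappa> * e)" using Cn0 n10 by (intro mult_left_mono) auto
      then show ?thesis by (simp add: algebra_simps)
    qed
    show ?thesis using a b by (simp add: algebra_simps)
  qed
  finally show ?thesis by (simp add: Cn_def algebra_simps)
qed

lemma F2_delta:
  fixes D :: "'m::finite cmat"
  assumes q: "q > 1" and q2: "q < 2" and T: "T > 0" and u: "u > 0"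
    and hT: "1 / (T * (q - 1)) \<le> \<beta>" and hu: "1 / (u * (q - 1)) \<le> \<beta>"
    and hD: "norm D \<le> (q - 1) * \<beta>"
    and r: "r > 0" and z: "r \<le> norm z"
    and e: "real CARD('m) ^ 3 * (\<beta> / r) \<le> 1/8"
    and inv: "invertible (F2g q T u n D z)"
  defines "e \<equiv> \<beta> / r" and "\<kappa> \<equiv> real CARD('m) ^ 3" and "n1 \<equiv> norm (mat 1 :: 'm cmat)"
  shows "norm (delta_q q (F2g q T u n D) z ** matrix_inv (F2g q T u n D z))
     \<le> 2 * \<kappa> * n1 * ((1 + 2 * 4 ^ nat \<bar>n\<bar>) * n1 + 1) * e"
proof -
  define F where "F = F2g q T u n D"
  have k1: "\<kappa> \<ge> 1" unfolding \<kappa>_def by (rule kap_ge1)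
  have b0: "\<beta> > 0"
  proof -
    have "0 < 1 / (T * (q - 1))" using T q by simp
    then show "\<beta> > 0" using hT by linarith
  qed
  have e0: "e \<ge> 0" using b0 r by (simp add: e_def)
  have e8: "\<kappa> * e \<le> 1/8" using e by (simp add: e_def \<kappa>_def)
  have e8': "e \<le> 1/8" using e8 k1 e0 by (meson mult_le_cancel_right1 order_trans not_le mult_left_le_one_le)
  have e4: "\<beta> / r \<le> 1/4" using e8' unfolding e_def by linarith
  have z0: "norm z > 0" using r z by linarith
  define qz where "qz = of_real q * z"
  have zq: "r \<le> norm qz"
  proof -
    have "norm qz = q * norm z" using q by (simp add: qz_def norm_mult)
    then show ?thesis using z q z0 by (smt (verit) mult_le_cancel_right1)
  qed
  have nT: "muf q T qz \<noteq> 0" and nu: "muf q u qz \<noteq> 0"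
    using muf_est[OF q T hT r zq e4] muf_est[OF q u hu r zq e4] by auto
  define wT where "wT = 1 / (of_real (q * T) * z)"
  define wu where "wu = 1 / (of_real (q * u) * z)"
  have wTb: "norm wT \<le> (q - 1) * e" and wub: "norm wu \<le> (q - 1) * e"
    using muf_est[OF q T hT r z e4] muf_est[OF q u hu r z e4] by (auto simp: wT_def wu_def e_def)
  have qe: "(q - 1) * e \<le> 1/4"
  proof -
    have "(q - 1) * e \<le> 1 * e" by (intro mult_right_mono) (use q2 e0 in auto)
    then show ?thesis using e8' by simp
  qed
  have feT: "muf q T z = (1 + wT) * muf q T qz" unfolding wT_def qz_def by (rule muf_feq[OF q])
  have feu: "muf q u z = (1 + wu) * muf q u qz" unfolding wu_def qz_def by (rule muf_feq[OF q])
  have wT1: "1 + wT \<noteq> 0"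
  proof
    assume "1 + wT = 0"
    then have "wT = -1" by (simp add: add_eq_0_iff)
    then show False using wTb qe by simp
  qed
  have wu1: "1 + wu \<noteq> 0"
  proof
    assume "1 + wu = 0"
    then have "wu = -1" by (simp add: add_eq_0_iff)
    then show False using wub qe by simp
  qed
  define g where "g w = muf q T w powi n / muf q u w" for w
  define \<rho> where "\<rho> = (1 + wT) powi (- n) * (1 + wu)"
  have gq: "g qz = g z * \<rho>"
  proof -
    have c1: "(1 + wT) powi n * (1 + wT) powi (- n) = 1"
      using wT1 by (simp add: power_int_minus)
    have gz: "g z = ((1 + wT) powi n * muf q T qz powi n) / ((1 + wu) * muf q u qz)"
      by (simp add: g_def feT feu power_int_mult_distrib)
    have gen: "(a * m1 / (b * m2)) * (a' * b) = m1 / m2"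
      if "a * a' = 1" "b \<noteq> 0" for a a' b m1 m2 :: complex
      using that by (cases "m2 = 0") (simp_all add: field_simps)
    have "g z * \<rho> = g qz"
      unfolding gz \<rho>_def using gen[OF c1 wu1] by (simp add: g_def)
    then show ?thesis by simp
  qed
  have \<rho>b: "norm (\<rho> - 1) \<le> (1 + 2 * 4 ^ nat \<bar>n\<bar>) * ((q - 1) * e)"
    unfolding \<rho>_def by (rule r_est[OF wTb wub qe])
  define M where "M w = mser q 1 (sc (1 / w) D)" for w
  define B' where "B' = sc (1 / qz) D"
  have Mz: "M z = (mat 1 + B') ** M qz"
  proof -
    have "sc (1 / z) D = q *\<^sub>R B'" unfolding B'_def qz_def using q by (simp add: sc_real[symmetric] sc_sc)
    then show ?thesis
      unfolding M_def B'_def using mser_feq[OF q, of 1 "sc (1 / qz) D"]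
      by (simp add: mm_add_rdistrib)
  qed
  have FF: "F w = sc (g w) (M w)" for w by (simp add: F_def F2g_def g_def M_def)
  define W where "W = matrix_inv (F z)"
  have FW: "F z ** W = mat 1" using matrix_inv_prop[OF inv] by (simp add: W_def F_def)
  define Y where "Y = sc (g z) (M qz ** W)"
  have Yeq: "(mat 1 + B') ** Y = mat 1"
  proof -
    have "(mat 1 + B') ** Y = sc (g z) (((mat 1 + B') ** M qz) ** W)"
      by (simp add: Y_def sc_mult_right matrix_mul_assoc)
    also have "\<dots> = F z ** W" by (simp add: FF Mz sc_mult_left)
    finally show ?thesis using FW by simp
  qed
  have nB': "norm B' \<le> (q - 1) * e"
  proof -
    have "norm B' = norm D / norm qz" by (simp add: B'_def norm_sc norm_divide)
    also have "\<dots> \<le> (q - 1) * \<beta> / r" by (intro frac_le hD zq) (use r q b0 in auto)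
    finally show ?thesis by (simp add: e_def)
  qed
  have kB: "real CARD('m) ^ 3 * norm B' \<le> 1/2"
  proof -
    have "\<kappa> * norm B' \<le> \<kappa> * ((q - 1) * e)" using k1 nB' by (intro mult_left_mono) auto
    also have "\<dots> \<le> \<kappa> * e"
    proof -
      have "(q - 1) * e \<le> 1 * e" using q2 e0 by (intro mult_right_mono) auto
      then show ?thesis using k1 by (intro mult_left_mono) auto
    qed
    finally have "\<kappa> * norm B' \<le> \<kappa> * e" .
    then show ?thesis using e8 unfolding \<kappa>_def by linarith
  qed
  have nY: "norm Y \<le> 2 * n1" unfolding n1_def by (rule right_inv_bound[OF Yeq kB])
  have diff: "F qz - F z = (sc (\<rho> - 1) (mat 1) - B') ** sc (g z) (M qz)"
  proof -
    have l: "F qz - F z = sc (g z * \<rho>) (M qz) - sc (g z) (M qz + B' ** M qz)"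
      by (simp add: FF Mz gq mm_add_rdistrib)
    have r: "(sc (\<rho> - 1) (mat 1) - B') ** sc (g z) (M qz) = sc (g z) (sc (\<rho> - 1) (M qz) - B' ** M qz)"
      by (simp add: mm_diff_rdistrib sc_mult_left sc_mult_right sc_diff sc_sc mult.commute)
    show ?thesis unfolding l r by (simp add: vec_eq_iff algebra_simps)
  qed
  have dW: "delta_q q F z ** W = (1 / (q - 1)) *\<^sub>R ((sc (\<rho> - 1) (mat 1) - B') ** Y)"
  proof -
    have "delta_q q F z = (1 / (q - 1)) *\<^sub>R (F qz - F z)"
      by (simp add: delta_q_def sigma_q_def qz_def)
    then show ?thesis
      by (simp add: diff mm_scaleR_left Y_def sc_mult_left sc_mult_right matrix_mul_assoc)
  qed
  have "norm (delta_q q F z ** W) = (1 / (q - 1)) * norm ((sc (\<rho> - 1) (mat 1) - B') ** Y)"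
    using q by (simp add: dW)
  also have "\<dots> \<le> (1 / (q - 1)) * (\<kappa> * norm (sc (\<rho> - 1) (mat 1) - B') * norm Y)"
    using q by (intro mult_left_mono) (auto simp: \<kappa>_def norm_mmult)
  also have "\<dots> \<le> (1 / (q - 1)) * (\<kappa> * ((1 + 2 * 4 ^ nat \<bar>n\<bar>) * ((q - 1) * e) * n1 + (q - 1) * e) * (2 * n1))"
  proof -
    have "norm (sc (\<rho> - 1) (mat 1) - B') \<le> norm (\<rho> - 1) * n1 + norm B'"
      using norm_triangle_ineq4[of "sc (\<rho> - 1) (mat 1)" B'] by (simp add: norm_sc n1_def)
    also have "\<dots> \<le> (1 + 2 * 4 ^ nat \<bar>n\<bar>) * ((q - 1) * e) * n1 + (q - 1) * e"
      by (intro add_mono mult_right_mono \<rho>b nB') (simp add: n1_def)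
    finally have 1: "norm (sc (\<rho> - 1) (mat 1) - B') \<le> (1 + 2 * 4 ^ nat \<bar>n\<bar>) * ((q - 1) * e) * n1 + (q - 1) * e" .
    have n10: "n1 \<ge> 0" by (simp add: n1_def)
    show ?thesis using q k1 e0 n10
      by (intro mult_left_mono mult_mono 1 nY) auto
  qed
  also have "\<dots> = 2 * \<kappa> * n1 * ((1 + 2 * 4 ^ nat \<bar>n\<bar>) * n1 + 1) * e"
    using q by (simp add: field_simps)
  finally show ?thesis by (simp add: F_def W_def)
qed



lemma F2_entry: "F2g q T u n D w $ i $ j = (muf q T w powi n / muf q u w) * mser q 1 (sc (1 / w) D) $ i $ j"
  by (simp add: F2g_def)

lemma Ment_holo:
  assumes q: "q > 1" and U: "0 \<notin> U"
  shows "(\<lambda>w. mser q 1 (sc (1 / w) (D::'m::finite cmat)) $ i $ j) holomorphic_on U"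
proof -
  have "((\<lambda>v. mser q 1 (sc v D) $ i $ j) \<circ> (\<lambda>w. 1 / w)) holomorphic_on U"
    by (intro holomorphic_on_compose_gen[OF _ mser_sc_entry_holo[OF q, of 1 D i j UNIV]])
       (use U in \<open>auto intro!: holomorphic_intros\<close>)
  then show ?thesis by (simp add: o_def)
qed

lemma F2_holo:
  assumes q: "q > 1" and T: "T > 0" and u: "u > 0" and U: "0 \<notin> U"
    and nz: "\<And>w. w \<in> U \<Longrightarrow> muf q T w \<noteq> 0 \<and> muf q u w \<noteq> 0"
  shows "(\<lambda>w. F2g q T u n (D::'m::finite cmat) w $ i $ j) holomorphic_on U"
  unfolding F2_entry
  by (intro holomorphic_intros Ment_holo[OF q U] muf_holo[OF q _ U]) (use T u nz in auto)

lemma E1g_def_entry: "sc (ellf q s w powi n / ellf q u w) (mser q q (sc w C)) $ i $ j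
   = (ellf q s w powi n / ellf q u w) * mser q q (sc w (C::'m::finite cmat)) $ i $ j"
  by simp

lemma E1_holo:
  assumes q: "q > 1" and nz: "\<And>w. w \<in> U \<Longrightarrow> ellf q s w \<noteq> 0 \<and> ellf q u w \<noteq> 0"
  shows "(\<lambda>w. sc (ellf q s w powi n / ellf q u w) (mser q q (sc w (C::'m::finite cmat))) $ i $ j) holomorphic_on U"
  unfolding E1g_def_entry
  by (intro holomorphic_intros ellf_holo[OF q] mser_sc_entry_holo[OF q]) (use q nz in auto)

lemma Ment_isCont:
  assumes q: "q > 1" and p: "p \<noteq> 0"
  shows "isCont (\<lambda>w. mser q 1 (sc (1 / w) (D::'m::finite cmat)) $ i $ j) p"
proof -
  have "continuous_on (-{0}) (\<lambda>w. mser q 1 (sc (1 / w) D) $ i $ j)"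
    by (rule holomorphic_on_imp_continuous_on[OF Ment_holo[OF q]]) auto
  then show ?thesis using p continuous_on_eq_continuous_at[of "-{0}"] by auto
qed

lemma F2_mero:
  assumes q: "q > 1" and T: "T > 0" and u: "u > 0"
  shows "mero_on (-{0}) (\<lambda>w. F2g q T u n (D::'m::finite cmat) w $ i $ j)"
  unfolding mero_on_def
proof (intro exI[of _ "Zset q T \<union> Zset q u"] conjI ballI)
  show "Zset q T \<union> Zset q u \<subseteq> - {0}" using Zset_nz[OF T q] Zset_nz[OF u q] by auto
next
  fix p :: complex assume p: "p \<in> - {0}"
  then have p0: "p \<noteq> 0" by simp
  obtain e1 where e1: "e1 > 0" "\<forall>w\<in>Zset q T. w \<noteq> p \<longrightarrow> e1 \<le> dist w p" using Zset_sep[OF q T p0] by blast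
  obtain e2 where e2: "e2 > 0" "\<forall>w\<in>Zset q u. w \<noteq> p \<longrightarrow> e2 \<le> dist w p" using Zset_sep[OF q u p0] by blast
  show "\<not> p islimpt (Zset q T \<union> Zset q u)"
    unfolding islimpt_approachable
  proof
    assume "\<forall>e>0. \<exists>x'\<in>Zset q T \<union> Zset q u. x' \<noteq> p \<and> dist x' p < e"
    then obtain x' where x': "x' \<in> Zset q T \<union> Zset q u" "x' \<noteq> p" "dist x' p < min e1 e2"
      using e1 e2 by (meson min_less_iff_conj)
    then show False using e1 e2 by auto
  qed
next
  show "(\<lambda>w. F2g q T u n D w $ i $ j) holomorphic_on (- {0} - (Zset q T \<union> Zset q u))"
  proof (rule F2_holo[OF q T u])
    fix w assume w: "w \<in> - {0} - (Zset q T \<union> Zset q u)"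
    then show "muf q T w \<noteq> 0 \<and> muf q u w \<noteq> 0"
      using muf_zero[OF q T, of w] muf_zero[OF q u, of w] by auto
  qed auto
next
  fix p :: complex assume pP: "p \<in> Zset q T \<union> Zset q u"
  then have p0: "p \<noteq> 0" using Zset_nz[OF T q] Zset_nz[OF u q] by auto
  obtain JT lT where LT: "((\<lambda>w. (w - p) ^ JT / muf q T w) \<longlongrightarrow> lT) (at p)" using muf_lim[OF q T p0] by blast
  obtain Ju lu where Lu: "((\<lambda>w. (w - p) ^ Ju / muf q u w) \<longlongrightarrow> lu) (at p)" using muf_lim[OF q u p0] by blast
  define Me where "Me w = mser q 1 (sc (1 / w) D) $ i $ j" for w
  have cM: "(Me \<longlongrightarrow> Me p) (at p)" using Ment_isCont[OF q p0, of D i j] unfolding isCont_def Me_def[abs_def] .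
  have cT: "(muf q T \<longlongrightarrow> muf q T p) (at p)" using muf_isCont[OF q T p0] by (simp add: isCont_def)
  show "\<exists>N c. ((\<lambda>z. (z - p) ^ N * F2g q T u n D z $ i $ j) \<longlongrightarrow> c) (at p)"
  proof (cases "n \<ge> 0")
    case True
    have e: "(z - p) ^ Ju * F2g q T u n D z $ i $ j = Me z * muf q T z ^ nat n * ((z - p) ^ Ju / muf q u z)" for z
      using True by (simp add: F2_entry Me_def power_int_def)
    have "((\<lambda>z. Me z * muf q T z ^ nat n * ((z - p) ^ Ju / muf q u z)) \<longlongrightarrow> Me p * muf q T p ^ nat n * lu) (at p)"
      by (intro tendsto_mult tendsto_power cM cT Lu)
    then show ?thesis unfolding e[symmetric] by blast
  next
    case False
    define m where "m = nat (- n)"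
    have e: "(z - p) ^ (Ju + JT * m) * F2g q T u n D z $ i $ j = Me z * ((z - p) ^ Ju / muf q u z) * ((z - p) ^ JT / muf q T z) ^ m" for z
    proof -
      have "muf q T z powi n = 1 / muf q T z ^ m" using False by (simp add: power_int_def m_def field_simps)
      then show ?thesis
        by (simp add: F2_entry Me_def power_add power_mult power_divide field_simps)
    qed
    have "((\<lambda>z. Me z * ((z - p) ^ Ju / muf q u z) * ((z - p) ^ JT / muf q T z) ^ m) \<longlongrightarrow> Me p * lu * lT ^ m) (at p)"
      by (intro tendsto_mult tendsto_power cM LT Lu)
    then show ?thesis unfolding e[symmetric] by blast
  qed
qed



definition TT :: "nat \<Rightarrow> real \<Rightarrow> real" where "TT k q = 1 / (q - 1) ^ (k + 2)"
definition NN :: "int \<Rightarrow> nat" where "NN n = nat (max 1 (1 - n))"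
definition ttf :: "nat \<Rightarrow> int \<Rightarrow> real \<Rightarrow> real" where "ttf k n q = TT k q ^ NN n"
definition uuf :: "nat \<Rightarrow> int \<Rightarrow> real \<Rightarrow> real" where "uuf k n q = (q * TT k q) powi n * ttf k n q"

lemma params:
  fixes n :: int and k :: nat
  assumes q: "1 < q" "q < 2"
  defines "b \<equiv> 2 ^ nat \<bar>n\<bar> :: real"
  shows "TT k q \<ge> 1" "1 / (TT k q * (q - 1)) \<le> b * (q - 1)"
    "ttf k n q \<ge> TT k q" "uuf k n q > 0" "1 / (uuf k n q * (q - 1)) \<le> b * (q - 1)" "b \<ge> 1"
proof -
  have h0: "0 < q - 1" "q - 1 < 1" using q by auto
  have pk: "(q - 1) ^ (k + 2) \<le> 1" using h0 by (intro power_le_one) auto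
  have pk0: "(q - 1) ^ (k + 2) > 0" using h0 by simp
  show T1: "TT k q \<ge> 1" unfolding TT_def using pk pk0 by simp
  have T0: "TT k q > 0" using T1 by simp
  show b1: "b \<ge> 1" unfolding b_def by simp
  have e1: "1 / (TT k q * (q - 1)) = (q - 1) ^ (k + 1)"
    unfolding TT_def using h0 by (simp add: field_simps)
  have e2: "(q - 1) ^ (k + 1) \<le> q - 1"
  proof -
    have "(q - 1) ^ k \<le> 1" using h0 by (intro power_le_one) auto
    then have "(q - 1) * (q - 1) ^ k \<le> (q - 1) * 1" using h0 by (intro mult_left_mono) auto
    then show ?thesis by simp
  qed
  show "1 / (TT k q * (q - 1)) \<le> b * (q - 1)"
    using e1 e2 b1 h0 by (smt (verit) mult_le_cancel_right1)
  have N1: "NN n \<ge> 1" unfolding NN_def by simp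
  show tt: "ttf k n q \<ge> TT k q" unfolding ttf_def
    using T1 N1 by (metis power_increasing power_one_right)
  have ub: "uuf k n q \<ge> TT k q / b"
  proof (cases "n \<ge> 0")
    case True
    then have "NN n = 1" unfolding NN_def by simp
    then have u: "uuf k n q = (q * TT k q) ^ nat n * TT k q"
      using True by (simp add: uuf_def ttf_def power_int_def)
    have qT: "q * TT k q \<ge> 1" using mult_mono[of 1 q 1 "TT k q"] T1 q by simp
    have "(q * TT k q) ^ nat n \<ge> 1" using qT by (rule one_le_power)
    then have "uuf k n q \<ge> TT k q" unfolding u using T0 by (simp add: mult_le_cancel_right1)
    moreover have "TT k q / b \<le> TT k q" using T0 b1 by (simp add: divide_le_eq mult_le_cancel_left1)
    ultimately show ?thesis by linarith
  next
    case False
    define m where "m = nat (- n)"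
    have NNm: "NN n = Suc m" unfolding NN_def m_def using False by simp
    have pn: "(q * TT k q) powi n = 1 / (q * TT k q) ^ m" using False by (simp add: power_int_def m_def field_simps)
    have u: "uuf k n q = TT k q / q ^ m"
    proof -
      have "uuf k n q = TT k q ^ Suc m / (q * TT k q) ^ m" by (simp add: uuf_def ttf_def NNm pn)
      also have "\<dots> = TT k q / q ^ m" using T0 q by (simp add: power_mult_distrib field_simps)
      finally show ?thesis .
    qed
    have nn: "m = nat \<bar>n\<bar>" using False by (simp add: m_def)
    have "q ^ m \<le> 2 ^ m" using q by (intro power_mono) auto
    then have "q ^ m \<le> b" unfolding b_def nn .
    then show ?thesis unfolding u using T0 q b1 by (intro divide_left_mono) auto
  qed
  show u0: "uuf k n q > 0"
    using ub T0 b1 by (smt (verit) divide_pos_pos)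
  have "1 / (uuf k n q * (q - 1)) \<le> 1 / ((TT k q / b) * (q - 1))"
    by (intro divide_left_mono mult_right_mono ub) (use h0 T0 b1 u0 in auto)
  also have "\<dots> = b * (1 / (TT k q * (q - 1)))" using b1 by (simp add: field_simps)
  also have "\<dots> \<le> b * (q - 1)"
    using e1 e2 b1 by (intro mult_left_mono) auto
  finally show "1 / (uuf k n q * (q - 1)) \<le> b * (q - 1)" .
qed




theorem lemma8p1:
  fixes A :: "real \<Rightarrow> complex^'m^'m" and k :: nat and n :: int
  assumes "\<forall>\<^sub>F q in at_right 1. invertible (A q)"
    and "k \<ge> 1"
    and "((\<lambda>q. ((q - 1) ^ k) *\<^sub>R matrix_inv (A q)) \<longlongrightarrow> 0) (at_right 1)"
  shows "\<exists>(E1 :: complex \<Rightarrow> real \<Rightarrow> complex^'m^'m) (F2 :: complex \<Rightarrow> real \<Rightarrow> complex^'m^'m).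
     (\<forall>\<^sub>F q in at_right 1. GL_conv (\<lambda>z. E1 z q)) \<and> O_star F2 \<and>
     (\<forall>\<^sub>F q in at_right 1. \<exists>r>0. \<forall>z. 0 < norm z \<and> norm z < r \<and>
        mat_analytic_on (\<lambda>w. F2 w q) {z, complex_of_real q * z} \<longrightarrow>
        sigma_q q (\<lambda>w. E1 w q ** F2 w q) z = mat (z powi n) ** A q ** (E1 z q ** F2 z q) \<and>
        mat (z powi n) ** A q ** (E1 z q ** F2 z q) = (E1 z q ** F2 z q) ** A q ** mat (z powi n))"
proof -
  define E1 where "E1 z q = sc (ellf q (TT k q) z powi n / ellf q (uuf k n q) z) (mser q q (sc z (ttf k n q *\<^sub>R A q)))" for z q
  define DD where "DD q = (1 / ttf k n q) *\<^sub>R matrix_inv (A q)" for q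
  define F2 where "F2 z q = F2g q (TT k q) (uuf k n q) n (DD q) z" for z q
  define good where "good q \<longleftrightarrow> 1 < q \<and> q < 2 \<and> invertible (A q) \<and> norm (matrix_inv (A q)) \<le> 1 / (q - 1) ^ k" for q
  define b where "b = (2 ^ nat \<bar>n\<bar> :: real)"
  define \<kappa> where "\<kappa> = real CARD('m) ^ 3"
  define n1 where "n1 = norm (mat 1 :: 'm cmat)"
  have k1: "\<kappa> \<ge> 1" unfolding \<kappa>_def by (rule kap_ge1)
  have n10: "n1 \<ge> 0" by (simp add: n1_def)
  have b1: "b \<ge> 1" by (simp add: b_def)
  have evgood: "eventually good (at_right 1)"
  proof -
    have ev2: "eventually (\<lambda>q. norm ((q - 1) ^ k *\<^sub>R matrix_inv (A q)) < 1) (at_right 1)"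
      using tendstoD[OF assms(3), of 1] by (simp add: dist_norm)
    have ev3: "eventually (\<lambda>q. q \<in> {1<..<2}) (at_right (1::real))"
      by (rule eventually_at_right_real) simp
    show ?thesis using assms(1) ev2 ev3
    proof eventually_elim
      case (elim q)
      have qk: "(q - 1) ^ k > 0" using elim by simp
      have "(q - 1) ^ k * norm (matrix_inv (A q)) < 1" using elim qk by simp
      then have "norm (matrix_inv (A q)) \<le> 1 / (q - 1) ^ k" using qk by (simp add: field_simps)
      then show ?case using elim by (simp add: good_def)
    qed
  qed
  have evsmall: "eventually (\<lambda>q. q - 1 < c) (at_right 1)" if "c > 0" for c :: real
  proof -
    have "eventually (\<lambda>q. q \<in> {1<..<1 + c}) (at_right (1::real))"
      by (rule eventually_at_right_real) (use that in simp)
    then show ?thesis by eventually_elim auto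
  qed
  have Dbound: "norm (DD q) \<le> (q - 1) * (b * (q - 1))" if g: "good q" for q
  proof -
    have q: "1 < q" "q < 2" using g by (auto simp: good_def)
    have P1: "TT k q \<ge> 1" by (rule params(1)[OF q])
    have P3: "ttf k n q \<ge> TT k q" by (rule params(3)[OF q])
    have tt0: "ttf k n q > 0" using P1 P3 by linarith
    have "norm (DD q) = norm (matrix_inv (A q)) / ttf k n q" using tt0 by (simp add: DD_def)
    also have "\<dots> \<le> (1 / (q - 1) ^ k) / TT k q"
      by (intro frac_le) (use g P1 P3 tt0 in \<open>auto simp: good_def\<close>)
    also have "\<dots> = (q - 1) ^ (k + 2) / (q - 1) ^ k" by (simp add: TT_def)
    also have "\<dots> = (q - 1) ^ 2" using q by (simp add: power_add power2_eq_square)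
    also have "\<dots> \<le> (q - 1) * (b * (q - 1))" using q b1 by (simp add: power2_eq_square mult_le_cancel_left1)
    finally show ?thesis .
  qed

  have gp: "1 < q \<and> q < 2 \<and> TT k q > 0 \<and> uuf k n q > 0 \<and> ttf k n q > 0
     \<and> 1 / (TT k q * (q - 1)) \<le> b * (q - 1) \<and> 1 / (uuf k n q * (q - 1)) \<le> b * (q - 1)
     \<and> norm (DD q) \<le> (q - 1) * (b * (q - 1))" if g: "good q" for q
  proof -
    have q: "1 < q" "q < 2" using g by (auto simp: good_def)
    have P1: "TT k q \<ge> 1" by (rule params(1)[OF q])
    have P2: "1 / (TT k q * (q - 1)) \<le> b * (q - 1)" unfolding b_def by (rule params(2)[OF q])
    have P3: "ttf k n q \<ge> TT k q" by (rule params(3)[OF q])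
    have P4: "uuf k n q > 0" by (rule params(4)[OF q])
    have P5: "1 / (uuf k n q * (q - 1)) \<le> b * (q - 1)" unfolding b_def by (rule params(5)[OF q])
    show ?thesis using q P1 P2 P3 P4 P5 Dbound[OF g] by auto
  qed
  have lin: "A * h < B" if "0 < A" "h < c" "c \<le> B / A" for A h c B :: real
  proof -
    have "A * h < A * c" using that by simp
    also have "\<dots> \<le> A * (B / A)" using that by (intro mult_left_mono) auto
    finally show ?thesis using that by simp
  qed
  have rho: "\<exists>\<rho>>0. \<forall>z\<in>K. \<rho> \<le> norm z" if K: "compact K" "K \<subseteq> -{0}" for K :: "complex set"
  proof -
    have "0 \<notin> K" using K by auto
    then obtain d where "d > 0" "\<forall>x\<in>K. d \<le> dist 0 x"
      using separate_point_closed[OF compact_imp_closed[OF K(1)], of 0] by blast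
    then show ?thesis by (intro exI[of _ d]) auto
  qed
  define K1 where "K1 = n1 * (2 + 6 * (4 ^ nat \<bar>n\<bar> + 1))"
  have K10: "K1 \<ge> 0" unfolding K1_def using n10 by simp
  have P2: "eventually (\<lambda>q. mat_analytic_on (\<lambda>w. F2 w q) K \<and> (\<forall>z\<in>K. norm (F2 z q - mat 1) < \<epsilon>)) (at_right 1)"
    if K: "compact K" "K \<subseteq> -{0}" and \<epsilon>: "\<epsilon> > 0" for K \<epsilon>
  proof -
    obtain \<rho> where \<rho>: "\<rho> > 0" "\<forall>z\<in>K. \<rho> \<le> norm z" using rho[OF K] by blast
    define c0 where "c0 = min (\<rho> / (16 * \<kappa> * b)) (\<epsilon> * \<rho> / (2 * (K1 + 1) * \<kappa> * b))"
    have c0: "c0 > 0" unfolding c0_def using \<rho> \<epsilon> k1 b1 K10 by simp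
    show ?thesis using evgood evsmall[OF c0]
    proof eventually_elim
      case (elim q)
      note G = gp[OF elim(1)]
      have q: "1 < q" "q < 2" using G by auto
      define \<beta> where "\<beta> = b * (q - 1)"
      have A0: "0 < 2 * \<kappa> * b / \<rho>" using k1 b1 \<rho> by simp
      have hb: "\<kappa> * (\<beta> / (\<rho> / 2)) \<le> 1/8"
      proof -
        have "(2 * \<kappa> * b / \<rho>) * (q - 1) < 1/8"
          by (rule lin[OF A0 elim(2)]) (use k1 b1 \<rho> in \<open>simp add: c0_def field_simps\<close>)
        moreover have "\<kappa> * (\<beta> / (\<rho> / 2)) = (2 * \<kappa> * b / \<rho>) * (q - 1)" by (simp add: \<beta>_def field_simps)
        ultimately show ?thesis by linarith
      qed
      have b0: "\<beta> \<ge> 0" using b1 q by (simp add: \<beta>_def)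
      have hb2: "\<kappa> * (\<beta> / \<rho>) \<le> 1/8"
      proof -
        have "\<beta> / \<rho> \<le> \<beta> / (\<rho> / 2)" using b0 \<rho> by (intro divide_left_mono) auto
        then have "\<kappa> * (\<beta> / \<rho>) \<le> \<kappa> * (\<beta> / (\<rho> / 2))" using k1 by (intro mult_left_mono) auto
        then show ?thesis using hb by (rule order_trans)
      qed
      have hb4: "\<beta> / (\<rho> / 2) \<le> 1/4"
      proof -
        have "0 \<le> \<beta> / (\<rho> / 2)" using b0 \<rho> by simp
        then have "1 * (\<beta> / (\<rho> / 2)) \<le> \<kappa> * (\<beta> / (\<rho> / 2))" using k1 by (intro mult_right_mono) auto
        then have "\<beta> / (\<rho> / 2) \<le> \<kappa> * (\<beta> / (\<rho> / 2))" by (simp only: mult_1)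
        then have "\<beta> / (\<rho> / 2) \<le> 1/8" using hb by (rule order_trans)
        then show ?thesis by simp
      qed
      have hK: "K1 * (\<kappa> * (\<beta> / \<rho>)) < \<epsilon>"
      proof -
        have A1: "0 < (K1 + 1) * \<kappa> * b / \<rho>" using K10 k1 b1 \<rho> by simp
        have "((K1 + 1) * \<kappa> * b / \<rho>) * (q - 1) < \<epsilon> / 2"
          by (rule lin[OF A1 elim(2)]) (use k1 b1 \<rho> K10 \<epsilon> in \<open>simp add: c0_def field_simps\<close>)
        moreover have "K1 * (\<kappa> * (\<beta> / \<rho>)) \<le> ((K1 + 1) * \<kappa> * b / \<rho>) * (q - 1)"
        proof -
          have "K1 * (\<kappa> * (\<beta> / \<rho>)) = K1 * (\<kappa> * b / \<rho> * (q - 1))" by (simp add: \<beta>_def field_simps)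
          also have "\<dots> \<le> (K1 + 1) * (\<kappa> * b / \<rho> * (q - 1))"
            using k1 b1 \<rho> q by (intro mult_right_mono) auto
          finally show ?thesis by (simp add: field_simps)
        qed
        ultimately show ?thesis using \<epsilon> by linarith
      qed
      define U where "U = {w::complex. \<rho> / 2 < norm w}"
      have oU: "open U" unfolding U_def by (intro open_Collect_less continuous_intros)
      have U0: "0 \<notin> U" unfolding U_def using \<rho> by simp
      have KU: "K \<subseteq> U" unfolding U_def using \<rho> by force
      have hT: "1 / (TT k q * (q - 1)) \<le> \<beta>" and hu: "1 / (uuf k n q * (q - 1)) \<le> \<beta>"
        using G by (auto simp: \<beta>_def)
      have hD: "norm (DD q) \<le> (q - 1) * \<beta>" using G by (simp add: \<beta>_def)
      have r2: "\<rho> / 2 > 0" using \<rho> by simp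
      have nzU: "muf q (TT k q) w \<noteq> 0 \<and> muf q (uuf k n q) w \<noteq> 0" if w: "w \<in> U" for w
      proof -
        have wr: "\<rho> / 2 \<le> norm w" using w by (simp add: U_def)
        show ?thesis using muf_est[OF q(1) _ hT r2 wr hb4] muf_est[OF q(1) _ hu r2 wr hb4] G by auto
      qed
      have an: "mat_analytic_on (\<lambda>w. F2 w q) K"
        unfolding mat_analytic_on_def
      proof (intro allI)
        fix i j
        have "(\<lambda>w. F2 w q $ i $ j) holomorphic_on U"
          unfolding F2_def by (rule F2_holo[OF q(1) _ _ U0 nzU]) (use G in auto)
        then have "(\<lambda>w. F2 w q $ i $ j) analytic_on U" using oU by (simp add: analytic_on_open)
        then show "(\<lambda>w. F2 w q $ i $ j) analytic_on K" using KU by (rule analytic_on_subset)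
      qed
      have nb: "norm (F2 z q - mat 1) < \<epsilon>" if z: "z \<in> K" for z
      proof -
        have zr: "\<rho> \<le> norm z" using \<rho> z by auto
        have "norm (F2 z q - mat 1) \<le> K1 * (\<kappa> * (\<beta> / \<rho>))"
          unfolding F2_def K1_def n1_def \<kappa>_def
          by (rule F2_est[OF q(1) _ _ hT hu hD \<rho>(1) zr]) (use G hb2 in \<open>auto simp: \<kappa>_def\<close>)
        then show ?thesis using hK by linarith
      qed
      show ?case using an nb by blast
    qed
  qed
  define K2 where "K2 = 2 * \<kappa> * n1 * ((1 + 2 * 4 ^ nat \<bar>n\<bar>) * n1 + 1)"
  have K20: "K2 \<ge> 0" unfolding K2_def using n10 k1 by simp
  define \<mu> where "\<mu> = real CARD('m) ^ 2"
  have \<mu>0: "\<mu> \<ge> 0" by (simp add: \<mu>_def)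
  have P3: "eventually (\<lambda>q. \<forall>z\<in>K. norm (delta_q q (\<lambda>w. F2 w q) z ** matrix_inv (F2 z q)) < \<epsilon>) (at_right 1)"
    if K: "compact K" "K \<subseteq> -{0}" and \<epsilon>: "\<epsilon> > 0" for K \<epsilon>
  proof -
    obtain \<rho> where \<rho>: "\<rho> > 0" "\<forall>z\<in>K. \<rho> \<le> norm z" using rho[OF K] by blast
    define c0 where "c0 = min (\<rho> / (16 * \<kappa> * b)) (min (\<epsilon> * \<rho> / (2 * (K2 + 1) * b)) (\<rho> / (2 * (\<mu> + 1) * (K1 + 1) * \<kappa> * b)))"
    have c0: "c0 > 0" unfolding c0_def using \<rho> \<epsilon> k1 b1 K10 K20 \<mu>0 by simp
    show ?thesis using evgood evsmall[OF c0]
    proof eventually_elim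
      case (elim q)
      note G = gp[OF elim(1)]
      have q: "1 < q" "q < 2" using G by auto
      define \<beta> where "\<beta> = b * (q - 1)"
      have b0: "\<beta> \<ge> 0" using b1 q by (simp add: \<beta>_def)
      have A0: "0 < 16 * \<kappa> * b / \<rho>" using k1 b1 \<rho> by simp
      have hb2: "\<kappa> * (\<beta> / \<rho>) \<le> 1/8"
      proof -
        have f1: "(16 * \<kappa> * b / \<rho>) * (q - 1) < 1"
          by (rule lin[OF A0 elim(2)]) (use k1 b1 \<rho> in \<open>simp add: c0_def field_simps\<close>)
        have f2: "\<kappa> * (\<beta> / \<rho>) = (16 * \<kappa> * b / \<rho>) * (q - 1) / 16" using \<rho> by (simp add: \<beta>_def field_simps)
        have aux: "X / 16 \<le> 1/8" if "X < 1" for X :: real using that by linarith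
        show ?thesis unfolding f2 by (rule aux[OF f1])
      qed
      have hK2: "K2 * (\<beta> / \<rho>) < \<epsilon>"
      proof -
        have A1: "0 < (K2 + 1) * b / \<rho>" using K20 b1 \<rho> by simp
        have "((K2 + 1) * b / \<rho>) * (q - 1) < \<epsilon> / 2"
          by (rule lin[OF A1 elim(2)]) (use b1 \<rho> K20 \<epsilon> in \<open>simp add: c0_def field_simps\<close>)
        moreover have "K2 * (\<beta> / \<rho>) \<le> ((K2 + 1) * b / \<rho>) * (q - 1)"
        proof -
          have "K2 * (\<beta> / \<rho>) = K2 * (b / \<rho> * (q - 1))" by (simp add: \<beta>_def field_simps)
          also have "\<dots> \<le> (K2 + 1) * (b / \<rho> * (q - 1))"
            using b1 \<rho> q by (intro mult_right_mono) auto
          finally show ?thesis by (simp add: field_simps)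
        qed
        ultimately show ?thesis using \<epsilon> by linarith
      qed
      have hK1: "\<mu> * (K1 * (\<kappa> * (\<beta> / \<rho>))) < 1"
      proof -
        have A1: "0 < (\<mu> + 1) * (K1 + 1) * \<kappa> * b / \<rho>" using K10 b1 \<rho> k1 \<mu>0 by simp
        have "((\<mu> + 1) * (K1 + 1) * \<kappa> * b / \<rho>) * (q - 1) < 1 / 2"
          by (rule lin[OF A1 elim(2)]) (use b1 \<rho> K10 k1 \<mu>0 in \<open>simp add: c0_def field_simps\<close>)
        moreover have "\<mu> * (K1 * (\<kappa> * (\<beta> / \<rho>))) \<le> ((\<mu> + 1) * (K1 + 1) * \<kappa> * b / \<rho>) * (q - 1)"
        proof -
          have x0: "0 \<le> \<kappa> * b / \<rho> * (q - 1)" using k1 b1 \<rho> q by simp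
          have "\<mu> * (K1 * (\<kappa> * (\<beta> / \<rho>))) = (\<mu> * K1) * (\<kappa> * b / \<rho> * (q - 1))" by (simp add: \<beta>_def field_simps)
          also have "\<dots> \<le> ((\<mu> + 1) * (K1 + 1)) * (\<kappa> * b / \<rho> * (q - 1))"
            using \<mu>0 K10 x0 by (intro mult_right_mono mult_mono) auto
          finally show ?thesis by (simp add: field_simps)
        qed
        ultimately show ?thesis by linarith
      qed
      have hT: "1 / (TT k q * (q - 1)) \<le> \<beta>" and hu: "1 / (uuf k n q * (q - 1)) \<le> \<beta>"
        using G by (auto simp: \<beta>_def)
      have hD: "norm (DD q) \<le> (q - 1) * \<beta>" using G by (simp add: \<beta>_def)
      have "norm (delta_q q (\<lambda>w. F2 w q) z ** matrix_inv (F2 z q)) < \<epsilon>" if z: "z \<in> K" for z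
      proof -
        have zr: "\<rho> \<le> norm z" using \<rho> z by auto
        have est: "norm (F2 z q - mat 1) \<le> K1 * (\<kappa> * (\<beta> / \<rho>))"
          unfolding F2_def K1_def n1_def \<kappa>_def
          by (rule F2_est[OF q(1) _ _ hT hu hD \<rho>(1) zr]) (use G hb2 in \<open>auto simp: \<kappa>_def\<close>)
        have "\<mu> * norm (F2 z q - mat 1) \<le> \<mu> * (K1 * (\<kappa> * (\<beta> / \<rho>)))"
          using est \<mu>0 by (rule mult_left_mono)
        then have inv: "invertible (F2 z q)"
          using hK1 by (intro near_id_invertible) (simp add: \<mu>_def)
        have "norm (delta_q q (\<lambda>w. F2 w q) z ** matrix_inv (F2 z q)) \<le> K2 * (\<beta> / \<rho>)"
          unfolding F2_def K2_def n1_def \<kappa>_def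
          by (rule F2_delta[OF q(1) q(2) _ _ hT hu hD \<rho>(1) zr])
             (use G hb2 inv in \<open>auto simp: \<kappa>_def F2_def\<close>)
        then show ?thesis using hK2 by linarith
      qed
      then show ?case by blast
    qed
  qed
  have P1: "eventually (\<lambda>q. (\<forall>i j. mero_on (- {0}) (\<lambda>z. F2 z q $ i $ j)) \<and>
        (\<exists>z. z \<noteq> 0 \<and> mat_analytic_on (\<lambda>w. F2 w q) {z} \<and> det (F2 z q) \<noteq> 0)) (at_right 1)"
  proof -
    have e1: "(1::real) / (\<mu> + 1) > 0" using \<mu>0 by simp
    have K1c: "compact {1::complex}" "{1::complex} \<subseteq> - {0}" by auto
    show ?thesis using evgood P2[OF K1c e1]
    proof eventually_elim
      case (elim q)
      note G = gp[OF elim(1)]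
      have q: "1 < q" using G by auto
      have mero: "\<forall>i j. mero_on (- {0}) (\<lambda>z. F2 z q $ i $ j)"
        unfolding F2_def using F2_mero[OF q] G by auto
      have an: "mat_analytic_on (\<lambda>w. F2 w q) {1}" using elim by blast
      have nb: "norm (F2 1 q - mat 1) < 1 / (\<mu> + 1)" using elim by blast
      have "\<mu> * norm (F2 1 q - mat 1) \<le> \<mu> * (1 / (\<mu> + 1))"
        using nb \<mu>0 by (intro mult_left_mono) auto
      also have "\<dots> < 1" using \<mu>0 by (simp add: field_simps)
      finally have "invertible (F2 1 q)" by (intro near_id_invertible) (simp add: \<mu>_def)
      then have "det (F2 1 q) \<noteq> 0" by (simp add: invertible_det_nz)
      then show ?case using mero an by (intro conjI exI[of _ 1]) auto
    qed
  qed
  have OS: "O_star F2"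
    unfolding O_star_def using P1 P2 P3 by blast
  have GL: "eventually (\<lambda>q. GL_conv (\<lambda>z. E1 z q)) (at_right 1)"
    using evgood
  proof eventually_elim
    case (elim q)
    note G = gp[OF elim(1)]
    have q: "1 < q" using G by auto
    define T where "T = TT k q"
    define u where "u = uuf k n q"
    have T0: "T > 0" and u0: "u > 0" using G by (auto simp: T_def u_def)
    define r where "r = (q - 1) / (2 * q * (T + u))"
    have r0: "r > 0" unfolding r_def using q T0 u0 by simp
    have nzc: "ellf q c w \<noteq> 0" if c: "c > 0" "c \<le> T + u" and w: "w \<in> ball 0 r" for c w
    proof (rule ellf_nz[OF q c(1)])
      have nw: "norm w < r" using w by simp
      have d0: "2 * q * (T + u) > 0" using q T0 u0 by simp
      have h1: "norm w * (2 * q * (T + u)) < q - 1"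
        using nw d0 unfolding r_def by (simp add: pos_less_divide_eq)
      have h2: "q * c * norm w \<le> q * (T + u) * norm w"
        using c q by (intro mult_right_mono mult_left_mono) auto
      have "q * c * norm w < (q - 1) / 2" using h1 h2 by (simp add: field_simps)
      then show "q * c * norm w / (q - 1) < 1/2" using q by (simp add: pos_divide_less_eq)
    qed
    have hol: "\<forall>i j. (\<lambda>z. E1 z q $ i $ j) holomorphic_on ball 0 r"
    proof (intro allI)
      fix i j
      show "(\<lambda>z. E1 z q $ i $ j) holomorphic_on ball 0 r"
        unfolding E1_def T_def[symmetric] u_def[symmetric]
        by (rule E1_holo[OF q]) (use nzc T0 u0 in auto)
    qed
    have E0: "E1 0 q = mat 1"
      by (simp add: E1_def ellf_0 mser_zero)
    have "invertible (mat 1 :: 'm cmat)" unfolding invertible_def by (intro exI[of _ "mat 1"]) simp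
    then show ?case unfolding GL_conv_def using hol r0 E0 by auto
  qed
  have EQ: "eventually (\<lambda>q. \<exists>r>0. \<forall>z. 0 < norm z \<and> norm z < r \<and>
        mat_analytic_on (\<lambda>w. F2 w q) {z, complex_of_real q * z} \<longrightarrow>
        sigma_q q (\<lambda>w. E1 w q ** F2 w q) z = mat (z powi n) ** A q ** (E1 z q ** F2 z q) \<and>
        mat (z powi n) ** A q ** (E1 z q ** F2 z q) = (E1 z q ** F2 z q) ** A q ** mat (z powi n)) (at_right 1)"
    using evgood
  proof eventually_elim
    case (elim q)
    note G = gp[OF elim(1)]
    have q: "1 < q" using G by auto
    have inv: "invertible (A q)" using elim by (simp add: good_def)
    have tt0: "ttf k n q > 0" using G by auto
    have CD: "(ttf k n q *\<^sub>R A q) ** DD q = mat 1"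
      using matrix_inv_prop[OF inv] tt0 by (simp add: DD_def mm_scaleR_left mm_scaleR_right)
    have DC: "DD q ** (ttf k n q *\<^sub>R A q) = mat 1"
      using matrix_inv_prop[OF inv] tt0 by (simp add: DD_def mm_scaleR_left mm_scaleR_right)
    show ?case
    proof (intro exI[of _ 1] conjI allI impI)
      fix z :: complex
      assume "0 < norm z \<and> norm z < 1 \<and> mat_analytic_on (\<lambda>w. F2 w q) {z, complex_of_real q * z}"
      then have z0: "z \<noteq> 0" by auto
      note M = main_alg[OF q _ _ tt0 z0 refl CD DC, of "TT k q" "uuf k n q" n]
      have M': "E1 (of_real q * z) q ** F2 (of_real q * z) q = mat (z powi n) ** A q ** (E1 z q ** F2 z q) \<and>
        mat (z powi n) ** A q ** (E1 z q ** F2 z q) = (E1 z q ** F2 z q) ** A q ** mat (z powi n)"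
        using M G by (simp add: E1_def F2_def F2g_def uuf_def)
      show "sigma_q q (\<lambda>w. E1 w q ** F2 w q) z = mat (z powi n) ** A q ** (E1 z q ** F2 z q)"
        using M' by (simp add: sigma_q_def)
      show "mat (z powi n) ** A q ** (E1 z q ** F2 z q) = (E1 z q ** F2 z q) ** A q ** mat (z powi n)"
        using M' by simp
    qed simp
  qed
  show ?thesis
    by (rule exI[of _ E1], rule exI[of _ F2]) (use GL OS EQ in blast)
qed


end
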